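(* Let $\phi \colon R \to S$ be a centralizing ring homomorphism and let \[ \mathcal{C}_\phi = \{ q \in \mathcal{C} R \mid \langle \phi D_q\rangle \in \mathscr{E}(S) \} . \] Then $R\mathcal{C}_\phi$ is a subring of $\widetilde R$ containing $R$. The map $\phi$ extends uniquely to a ring homomorphism $\widetilde{\phi} \colon R\mathcal{C}_\phi \to \widetilde S$ which is centralizing. In particular, $\widetilde{\phi}(\mathcal{C}_\phi) \subseteq \mathcal{C} S$.
   Context: $R$ and $S$ are arbitrary rings with $1$. For a ring $R$, $\operatorname{Q} R$ denotes the symmetric ring of quotients of $R$ (it contains $R$ as a subring), and $\mathscr{E}(R)$ denotes the collection of all two-sided ideals of $R$ having zero left and right annihilator in $R$. For $q \in \operatorname{Q} R$, $D_q := \{ r \in R \mid qRr \subseteq R \text{ and } rRq \subseteq R\}$; this is an ideal belonging to $\mathscr{E}(R)$. The extended center is $\mathcal{C} R := \mathcal{Z}(\operatorname{Q} R)$, the center of $\operatorname{Q} R$ (equal to the centralizer of $R$ in $\operatorname{Q} R$), and $\widetilde R := R(\mathcal{C} R) \subseteq \operatorname{Q} R$ is the subring generated by $R$ and $\mathcal{C} R$; similarly $\mathcal{C} S = \mathcal{Z}(\operatorname{Q} S)$ and $\widetilde S = S(\mathcal{C} S)$. A ring homomorphism $\phi \colon R \to S$ is centralizing if $S$ is generated by $\phi(R)$ and the centralizer $C_S(\phi R) = \{ s \in S \mid s\phi(r) = \phi(r)s \ \forall r \in R\}$; for an ideal $I$ of $R$, $\langle \phi I\rangle$ denotes the ideal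 of $S$ generated by $\phi(I)$, which equals $\phi(I)\,C_S(\phi R) = C_S(\phi R)\,\phi(I)$. *)

theory Defs
  imports "HOL-Algebra.Algebra"
begin

definition sandwich :: "('a, 'b) ring_scheme \<Rightarrow> 'a \<Rightarrow> 'a set \<Rightarrow> 'a \<Rightarrow> 'a set" where
  "sandwich Q u Y v = {y. \<exists>x \<in> Y. y = (u \<otimes>\<^bsub>Q\<^esub> x) \<otimes>\<^bsub>Q\<^esub> v}"

definition dense_ideals :: "('a, 'b) ring_scheme \<Rightarrow> 'a set set" where
  "dense_ideals R = {I. ideal I R \<and>
      (\<forall>r \<in> carrier R. (\<forall>x \<in> I. r \<otimes>\<^bsub>R\<^esub> x = \<zero>\<^bsub>R\<^esub>) \<longrightarrow> r = \<zero>\<^bsub>R\<^esub>) \<and>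
      (\<forall>r \<in> carrier R. (\<forall>x \<in> I. x \<otimes>\<^bsub>R\<^esub> r = \<zero>\<^bsub>R\<^esub>) \<longrightarrow> r = \<zero>\<^bsub>R\<^esub>)}"

text \<open>Q R is characterised up to unique isomorphism over R by the
  following properties (Lanning): (i) every q has some I in E(R) with qI, Iq in R;
  (ii) qI = 0 or Iq = 0 with I in E(R) forces q = 0; (iii) every compatible pair
  (f, g) of a right-linear f and left-linear g from I in E(R) to R is realised by
  some q via qx = f x and xq = g x.\<close>

definition sym_quot :: "'a ring \<Rightarrow> 'a ring \<Rightarrow> bool" where
  "sym_quot R Q \<longleftrightarrow> ring Q \<and> subring (carrier R) Q \<and> R = Q\<lparr>carrier := carrier R\<rparr> \<and>
     (\<forall>q \<in> carrier Q. \<exists>I \<in> dense_ideals R.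
        (\<forall>x \<in> I. q \<otimes>\<^bsub>Q\<^esub> x \<in> carrier R \<and> x \<otimes>\<^bsub>Q\<^esub> q \<in> carrier R)) \<and>
     (\<forall>q \<in> carrier Q. \<forall>I \<in> dense_ideals R.
        ((\<forall>x \<in> I. q \<otimes>\<^bsub>Q\<^esub> x = \<zero>\<^bsub>Q\<^esub>) \<or> (\<forall>x \<in> I. x \<otimes>\<^bsub>Q\<^esub> q = \<zero>\<^bsub>Q\<^esub>)) \<longrightarrow> q = \<zero>\<^bsub>Q\<^esub>) \<and>
     (\<forall>I \<in> dense_ideals R. \<forall>f g.
        f \<in> I \<rightarrow> carrier R \<and> g \<in> I \<rightarrow> carrier R \<and>
        (\<forall>x \<in> I. \<forall>y \<in> I. f (x \<oplus>\<^bsub>R\<^esub> y) = f x \<oplus>\<^bsub>R\<^esub> f y \<and> g (x \<oplus>\<^bsub>R\<^esub> y) = g x \<oplus>\<^bsub>R\<^esub> g y) \<and>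
        (\<forall>x \<in> I. \<forall>r \<in> carrier R. f (x \<otimes>\<^bsub>R\<^esub> r) = f x \<otimes>\<^bsub>R\<^esub> r \<and> g (r \<otimes>\<^bsub>R\<^esub> x) = r \<otimes>\<^bsub>R\<^esub> g x) \<and>
        (\<forall>x \<in> I. \<forall>y \<in> I. x \<otimes>\<^bsub>R\<^esub> f y = g x \<otimes>\<^bsub>R\<^esub> y)
        \<longrightarrow> (\<exists>q \<in> carrier Q. \<forall>x \<in> I. q \<otimes>\<^bsub>Q\<^esub> x = f x \<and> x \<otimes>\<^bsub>Q\<^esub> q = g x))"

definition Dq :: "'a ring \<Rightarrow> 'a ring \<Rightarrow> 'a \<Rightarrow> 'a set" where
  "Dq R Q q = {r \<in> carrier R. sandwich Q q (carrier R) r \<subseteq> carrier R \<and>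
                              sandwich Q r (carrier R) q \<subseteq> carrier R}"

definition ring_centralizer :: "('a, 'b) ring_scheme \<Rightarrow> 'a set \<Rightarrow> 'a set" where
  "ring_centralizer B Y = {s \<in> carrier B. \<forall>x \<in> Y. s \<otimes>\<^bsub>B\<^esub> x = x \<otimes>\<^bsub>B\<^esub> s}"

definition ext_center :: "'a ring \<Rightarrow> 'a set" where
  "ext_center Q = ring_centralizer Q (carrier Q)"

definition centralizing :: "('a, 'c) ring_scheme \<Rightarrow> ('b, 'd) ring_scheme \<Rightarrow> ('a \<Rightarrow> 'b) \<Rightarrow> bool" where
  "centralizing A B h \<longleftrightarrow>
     carrier B = generate_ring B (h ` carrier A \<union> ring_centralizer B (h ` carrier A))"

definition C_phi :: "'a ring \<Rightarrow> 'a ring \<Rightarrow> 'b ring \<Rightarrow> ('a \<Rightarrow> 'b) \<Rightarrow> 'a set" where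
  "C_phi R QR S \<phi> = {q \<in> ext_center QR. genideal S (\<phi> ` Dq R QR q) \<in> dense_ideals S}"

end

theory Submission
  imports Defs
begin

lemma ainv_sub:
  assumes "ring Q" "subring H Q" "h \<in> H"
  shows "a_inv (Q\<lparr>carrier := H\<rparr>) h = a_inv Q h"
proof -
  interpret Q: ring Q by fact
  interpret H: ring "Q\<lparr>carrier := H\<rparr>" using Q.subring_is_ring[OF assms(2)] .
  have Hc: "H \<subseteq> carrier Q" using assms(2) subringE(1) by blast
  have 1: "a_inv (Q\<lparr>carrier := H\<rparr>) h \<in> H" using H.a_inv_closed assms(3) by simp
  have 2: "a_inv (Q\<lparr>carrier := H\<rparr>) h \<oplus>\<^bsub>Q\<^esub> h = \<zero>\<^bsub>Q\<^esub>"
    using H.l_neg[of h] assms(3) by simp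
  have "h \<in> carrier Q" "a_inv (Q\<lparr>carrier := H\<rparr>) h \<in> carrier Q" using 1 Hc assms(3) by auto
  then show ?thesis using Q.minus_equality[OF 2] by simp
qed

locale L =
  fixes R QR :: "'a ring" and S QS :: "'b ring" and \<phi> :: "'a \<Rightarrow> 'b"
  assumes R: "ring R" and S: "ring S"
    and sqR: "sym_quot R QR" and sqS: "sym_quot S QS"
    and hom: "\<phi> \<in> ring_hom R S" and cz: "centralizing R S \<phi>"

sublocale L \<subseteq> QR: ring QR using sqR unfolding sym_quot_def by auto
sublocale L \<subseteq> QS: ring QS using sqS unfolding sym_quot_def by auto

context L
begin

lemma R_eq: "R = QR\<lparr>carrier := carrier R\<rparr>" using sqR unfolding sym_quot_def by auto
lemma S_eq: "S = QS\<lparr>carrier := carrier S\<rparr>" using sqS unfolding sym_quot_def by auto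
lemma Rsub: "subring (carrier R) QR" using sqR unfolding sym_quot_def by auto
lemma Ssub: "subring (carrier S) QS" using sqS unfolding sym_quot_def by auto

lemma R_ops[simp]: "monoid.mult R = monoid.mult QR" "ring.add R = ring.add QR" "monoid.one R = monoid.one QR" "ring.zero R = ring.zero QR"
  by (subst R_eq, simp)+
lemma S_ops[simp]: "monoid.mult S = monoid.mult QS" "ring.add S = ring.add QS" "monoid.one S = monoid.one QS" "ring.zero S = ring.zero QS"
  by (subst S_eq, simp)+

lemma Rc: "carrier R \<subseteq> carrier QR" using Rsub subringE(1) by blast
lemma Sc: "carrier S \<subseteq> carrier QS" using Ssub subringE(1) by blast
lemma Rc': "x \<in> carrier R \<Longrightarrow> x \<in> carrier QR" using Rc by blast
lemma Sc': "x \<in> carrier S \<Longrightarrow> x \<in> carrier QS" using Sc by blast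

lemma Rm: "a \<in> carrier R \<Longrightarrow> b \<in> carrier R \<Longrightarrow> a \<otimes>\<^bsub>QR\<^esub> b \<in> carrier R"
  using subringE(6)[OF Rsub] by auto
lemma Ra: "a \<in> carrier R \<Longrightarrow> b \<in> carrier R \<Longrightarrow> a \<oplus>\<^bsub>QR\<^esub> b \<in> carrier R"
  using subringE(7)[OF Rsub] by auto
lemma Rn: "a \<in> carrier R \<Longrightarrow> \<ominus>\<^bsub>QR\<^esub> a \<in> carrier R"
  using subringE(5)[OF Rsub] by auto
lemma R1: "\<one>\<^bsub>QR\<^esub> \<in> carrier R"
  using subringE(3)[OF Rsub] by auto
lemma R0: "\<zero>\<^bsub>QR\<^esub> \<in> carrier R"
  using subringE(2)[OF Rsub] by auto
lemma Sm: "a \<in> carrier S \<Longrightarrow> b \<in> carrier S \<Longrightarrow> a \<otimes>\<^bsub>QS\<^esub> b \<in> carrier S"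
  using subringE(6)[OF Ssub] by auto
lemma Sa: "a \<in> carrier S \<Longrightarrow> b \<in> carrier S \<Longrightarrow> a \<oplus>\<^bsub>QS\<^esub> b \<in> carrier S"
  using subringE(7)[OF Ssub] by auto
lemma Sn: "a \<in> carrier S \<Longrightarrow> \<ominus>\<^bsub>QS\<^esub> a \<in> carrier S"
  using subringE(5)[OF Ssub] by auto
lemma S1: "\<one>\<^bsub>QS\<^esub> \<in> carrier S"
  using subringE(3)[OF Ssub] by auto
lemma S0: "\<zero>\<^bsub>QS\<^esub> \<in> carrier S"
  using subringE(2)[OF Ssub] by auto

lemma R_ainv: "a \<in> carrier R \<Longrightarrow> a_inv R a = a_inv QR a"
  by (subst R_eq) (rule ainv_sub[OF QR.ring_axioms Rsub])
lemma S_ainv: "a \<in> carrier S \<Longrightarrow> a_inv S a = a_inv QS a"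
  by (subst S_eq) (rule ainv_sub[OF QS.ring_axioms Ssub])

lemma phc: "x \<in> carrier R \<Longrightarrow> \<phi> x \<in> carrier S"
  using ring_hom_closed[OF hom] by blast
lemma phm: "x \<in> carrier R \<Longrightarrow> y \<in> carrier R \<Longrightarrow> \<phi> (x \<otimes>\<^bsub>QR\<^esub> y) = \<phi> x \<otimes>\<^bsub>QS\<^esub> \<phi> y"
  using ring_hom_mult[OF hom] by fastforce
lemma pha: "x \<in> carrier R \<Longrightarrow> y \<in> carrier R \<Longrightarrow> \<phi> (x \<oplus>\<^bsub>QR\<^esub> y) = \<phi> x \<oplus>\<^bsub>QS\<^esub> \<phi> y"
  using ring_hom_add[OF hom] by fastforce
lemma ph1: "\<phi> \<one>\<^bsub>QR\<^esub> = \<one>\<^bsub>QS\<^esub>"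
  using ring_hom_one[OF hom] by simp
lemma phn: "x \<in> carrier R \<Longrightarrow> \<phi> (\<ominus>\<^bsub>QR\<^esub> x) = \<ominus>\<^bsub>QS\<^esub> \<phi> x"
proof -
  assume x: "x \<in> carrier R"
  interpret H: ring_hom_ring R S \<phi> using R S hom by (simp add: ring_hom_ringI2)
  have "\<phi> (a_inv R x) = a_inv S (\<phi> x)" using H.hom_a_inv x by blast
  then show ?thesis using R_ainv[OF x] S_ainv[OF phc[OF x]] by simp
qed
lemma ph0: "\<phi> \<zero>\<^bsub>QR\<^esub> = \<zero>\<^bsub>QS\<^esub>"
proof -
  interpret H: ring_hom_ring R S \<phi> using R S hom by (simp add: ring_hom_ringI2)
  show ?thesis using H.hom_zero by simp
qed

definition Cset :: "'b set" where "Cset = ring_centralizer S (\<phi> ` carrier R)"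

lemma Cset_c: "c \<in> Cset \<Longrightarrow> c \<in> carrier S" unfolding Cset_def ring_centralizer_def by auto
lemma Cset_comm: "c \<in> Cset \<Longrightarrow> r \<in> carrier R \<Longrightarrow> c \<otimes>\<^bsub>QS\<^esub> \<phi> r = \<phi> r \<otimes>\<^bsub>QS\<^esub> c"
  unfolding Cset_def ring_centralizer_def by auto

lemma S_induct[consumes 1, case_names one phi cen neg add mult]:
  assumes "s \<in> carrier S" "P \<one>\<^bsub>QS\<^esub>" "\<And>r. r \<in> carrier R \<Longrightarrow> P (\<phi> r)" "\<And>c. c \<in> Cset \<Longrightarrow> P c"
    "\<And>a. a \<in> carrier S \<Longrightarrow> P a \<Longrightarrow> P (\<ominus>\<^bsub>QS\<^esub> a)"
    "\<And>a b. a \<in> carrier S \<Longrightarrow> b \<in> carrier S \<Longrightarrow> P a \<Longrightarrow> P b \<Longrightarrow> P (a \<oplus>\<^bsub>QS\<^esub> b)"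
    "\<And>a b. a \<in> carrier S \<Longrightarrow> b \<in> carrier S \<Longrightarrow> P a \<Longrightarrow> P b \<Longrightarrow> P (a \<otimes>\<^bsub>QS\<^esub> b)"
  shows "P s"
proof -
  have "s \<in> generate_ring S (\<phi> ` carrier R \<union> Cset)"
    using cz assms(1) unfolding centralizing_def Cset_def by simp
  then have "s \<in> carrier S \<and> P s"
  proof (induction rule: generate_ring.induct)
    case one then show ?case using S1 assms(2) by simp
  next
    case (incl h) then show ?case using assms(3,4) phc Cset_c by auto
  next
    case (a_inv h) then show ?case using assms(5) S_ainv Sn by auto
  next
    case (eng_add h1 h2) then show ?case using assms(6) Sa by auto
  next
    case (eng_mult h1 h2) then show ?case using assms(7) Sm by auto
  qed
  then show ?thesis by blast
qed

lemma idealS: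
  assumes "K \<subseteq> carrier S" "\<zero>\<^bsub>QS\<^esub> \<in> K"
    "\<And>a b. a \<in> K \<Longrightarrow> b \<in> K \<Longrightarrow> a \<oplus>\<^bsub>QS\<^esub> b \<in> K"
    "\<And>a. a \<in> K \<Longrightarrow> \<ominus>\<^bsub>QS\<^esub> a \<in> K"
    "\<And>a x. a \<in> K \<Longrightarrow> x \<in> carrier S \<Longrightarrow> x \<otimes>\<^bsub>QS\<^esub> a \<in> K"
    "\<And>a x. a \<in> K \<Longrightarrow> x \<in> carrier S \<Longrightarrow> a \<otimes>\<^bsub>QS\<^esub> x \<in> K"
  shows "ideal K S"
proof -
  interpret S: ring S by (rule S)
  show ?thesis
  proof (rule idealI[OF S])
    show "subgroup K (add_monoid S)"
      apply (rule S.add.subgroupI)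
      using assms S_ainv by auto
  qed (use assms in auto)
qed

definition faithful :: "'a set \<Rightarrow> bool" where
  "faithful I \<longleftrightarrow> (\<forall>z\<in>carrier QS. (\<forall>i\<in>I. z \<otimes>\<^bsub>QS\<^esub> \<phi> i = \<zero>\<^bsub>QS\<^esub>) \<longrightarrow> z = \<zero>\<^bsub>QS\<^esub>)"

definition prods :: "'a set \<Rightarrow> 'a set \<Rightarrow> 'a set" where
  "prods I1 I2 = {a \<otimes>\<^bsub>QR\<^esub> b | a b. a \<in> I1 \<and> b \<in> I2}"

definition good :: "'a \<Rightarrow> 'b \<Rightarrow> 'a set \<Rightarrow> bool" where
  "good x y I \<longleftrightarrow> I \<subseteq> carrier R \<and> faithful I \<and>
    (\<forall>i\<in>I. \<forall>r\<in>carrier R. x \<otimes>\<^bsub>QR\<^esub> r \<otimes>\<^bsub>QR\<^esub> i \<in> carrier R \<and>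
        y \<otimes>\<^bsub>QS\<^esub> \<phi> r \<otimes>\<^bsub>QS\<^esub> \<phi> i = \<phi> (x \<otimes>\<^bsub>QR\<^esub> r \<otimes>\<^bsub>QR\<^esub> i))"

lemma prods_sub: "I1 \<subseteq> carrier R \<Longrightarrow> I2 \<subseteq> carrier R \<Longrightarrow> prods I1 I2 \<subseteq> carrier R"
  unfolding prods_def using Rm by blast

lemma faithful_prods:
  assumes f1: "faithful I1" and f2: "faithful I2" and s1: "I1 \<subseteq> carrier R" and s2: "I2 \<subseteq> carrier R"
  shows "faithful (prods I1 I2)"
  unfolding faithful_def
proof (intro ballI impI)
  fix z assume z: "z \<in> carrier QS" and h: "\<forall>i\<in>prods I1 I2. z \<otimes>\<^bsub>QS\<^esub> \<phi> i = \<zero>\<^bsub>QS\<^esub>"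
  have "\<forall>a\<in>I1. z \<otimes>\<^bsub>QS\<^esub> \<phi> a = \<zero>\<^bsub>QS\<^esub>"
  proof
    fix a assume a: "a \<in> I1"
    have "\<forall>b\<in>I2. (z \<otimes>\<^bsub>QS\<^esub> \<phi> a) \<otimes>\<^bsub>QS\<^esub> \<phi> b = \<zero>\<^bsub>QS\<^esub>"
    proof
      fix b assume b: "b \<in> I2"
      have ar: "a \<in> carrier R" "b \<in> carrier R" using a b s1 s2 by auto
      have "a \<otimes>\<^bsub>QR\<^esub> b \<in> prods I1 I2" unfolding prods_def using a b by blast
      then have "z \<otimes>\<^bsub>QS\<^esub> \<phi> (a \<otimes>\<^bsub>QR\<^esub> b) = \<zero>\<^bsub>QS\<^esub>" using h by blast
      then show "(z \<otimes>\<^bsub>QS\<^esub> \<phi> a) \<otimes>\<^bsub>QS\<^esub> \<phi> b = \<zero>\<^bsub>QS\<^esub>"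
        using ar z by (simp add: phm QS.m_assoc Sc' phc)
    qed
    then show "z \<otimes>\<^bsub>QS\<^esub> \<phi> a = \<zero>\<^bsub>QS\<^esub>" using f2 z a s1 unfolding faithful_def
      by (meson QS.m_closed Sc' phc subsetD)
  qed
  then show "z = \<zero>\<^bsub>QS\<^esub>" using f1 z unfolding faithful_def by blast
qed

lemma faithful_R: "faithful (carrier R)"
  unfolding faithful_def using R1 ph1 by force

lemma good_R: assumes r0: "r0 \<in> carrier R" shows "good r0 (\<phi> r0) (carrier R)"
  unfolding good_def
proof (intro conjI ballI)
  fix i r assume i: "i \<in> carrier R" and r: "r \<in> carrier R"
  show "r0 \<otimes>\<^bsub>QR\<^esub> r \<otimes>\<^bsub>QR\<^esub> i \<in> carrier R" using Rm r0 r i by blast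
  show "\<phi> r0 \<otimes>\<^bsub>QS\<^esub> \<phi> r \<otimes>\<^bsub>QS\<^esub> \<phi> i = \<phi> (r0 \<otimes>\<^bsub>QR\<^esub> r \<otimes>\<^bsub>QR\<^esub> i)"
    using r0 r i by (simp add: phm Rm)
qed (auto simp: faithful_R)

lemma good_neg:
  assumes g: "good x y I" and x: "x \<in> carrier QR" and y: "y \<in> carrier QS"
  shows "good (\<ominus>\<^bsub>QR\<^esub> x) (\<ominus>\<^bsub>QS\<^esub> y) I"
  unfolding good_def
proof (intro conjI ballI)
  show "I \<subseteq> carrier R" "faithful I" using g unfolding good_def by auto
  fix i r assume i: "i \<in> I" and r: "r \<in> carrier R"
  have ir: "i \<in> carrier R" using i g unfolding good_def by auto
  have m: "x \<otimes>\<^bsub>QR\<^esub> r \<otimes>\<^bsub>QR\<^esub> i \<in> carrier R"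
    and e: "y \<otimes>\<^bsub>QS\<^esub> \<phi> r \<otimes>\<^bsub>QS\<^esub> \<phi> i = \<phi> (x \<otimes>\<^bsub>QR\<^esub> r \<otimes>\<^bsub>QR\<^esub> i)"
    using g i r unfolding good_def by auto
  have e1: "(\<ominus>\<^bsub>QR\<^esub> x) \<otimes>\<^bsub>QR\<^esub> r \<otimes>\<^bsub>QR\<^esub> i = \<ominus>\<^bsub>QR\<^esub> (x \<otimes>\<^bsub>QR\<^esub> r \<otimes>\<^bsub>QR\<^esub> i)"
    using x r ir by (simp add: QR.l_minus Rc')
  have e2: "(\<ominus>\<^bsub>QS\<^esub> y) \<otimes>\<^bsub>QS\<^esub> \<phi> r \<otimes>\<^bsub>QS\<^esub> \<phi> i = \<ominus>\<^bsub>QS\<^esub> (y \<otimes>\<^bsub>QS\<^esub> \<phi> r \<otimes>\<^bsub>QS\<^esub> \<phi> i)"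
    using y r ir by (simp add: QS.l_minus Sc' phc)
  show "(\<ominus>\<^bsub>QR\<^esub> x) \<otimes>\<^bsub>QR\<^esub> r \<otimes>\<^bsub>QR\<^esub> i \<in> carrier R" using e1 m Rn by simp
  show "(\<ominus>\<^bsub>QS\<^esub> y) \<otimes>\<^bsub>QS\<^esub> \<phi> r \<otimes>\<^bsub>QS\<^esub> \<phi> i = \<phi> ((\<ominus>\<^bsub>QR\<^esub> x) \<otimes>\<^bsub>QR\<^esub> r \<otimes>\<^bsub>QR\<^esub> i)"
    using e1 e2 e m phn by simp
qed

lemma good_add:
  assumes g1: "good x1 y1 I1" and g2: "good x2 y2 I2"
    and x: "x1 \<in> carrier QR" "x2 \<in> carrier QR" and y: "y1 \<in> carrier QS" "y2 \<in> carrier QS"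
  shows "good (x1 \<oplus>\<^bsub>QR\<^esub> x2) (y1 \<oplus>\<^bsub>QS\<^esub> y2) (prods I1 I2)"
  unfolding good_def
proof (intro conjI ballI)
  have s1: "I1 \<subseteq> carrier R" and s2: "I2 \<subseteq> carrier R" using g1 g2 unfolding good_def by auto
  show "prods I1 I2 \<subseteq> carrier R" using prods_sub[OF s1 s2] .
  show "faithful (prods I1 I2)" using faithful_prods s1 s2 g1 g2 unfolding good_def by auto
  fix i r assume i: "i \<in> prods I1 I2" and r: "r \<in> carrier R"
  then obtain a b where ab: "i = a \<otimes>\<^bsub>QR\<^esub> b" "a \<in> I1" "b \<in> I2" unfolding prods_def by blast
  have ar: "a \<in> carrier R" "b \<in> carrier R" using ab s1 s2 by auto
  have ra: "r \<otimes>\<^bsub>QR\<^esub> a \<in> carrier R" using Rm r ar by blast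
  have m1: "x1 \<otimes>\<^bsub>QR\<^esub> r \<otimes>\<^bsub>QR\<^esub> a \<in> carrier R"
    and e1: "y1 \<otimes>\<^bsub>QS\<^esub> \<phi> r \<otimes>\<^bsub>QS\<^esub> \<phi> a = \<phi> (x1 \<otimes>\<^bsub>QR\<^esub> r \<otimes>\<^bsub>QR\<^esub> a)"
    using g1 ab r unfolding good_def by auto
  have m2: "x2 \<otimes>\<^bsub>QR\<^esub> (r \<otimes>\<^bsub>QR\<^esub> a) \<otimes>\<^bsub>QR\<^esub> b \<in> carrier R"
    and e2: "y2 \<otimes>\<^bsub>QS\<^esub> \<phi> (r \<otimes>\<^bsub>QR\<^esub> a) \<otimes>\<^bsub>QS\<^esub> \<phi> b = \<phi> (x2 \<otimes>\<^bsub>QR\<^esub> (r \<otimes>\<^bsub>QR\<^esub> a) \<otimes>\<^bsub>QR\<^esub> b)"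
    using g2 ab ra unfolding good_def by auto
  have c: "a \<in> carrier QR" "b \<in> carrier QR" "r \<in> carrier QR" using ar r Rc' by auto
  have pc: "\<phi> a \<in> carrier QS" "\<phi> b \<in> carrier QS" "\<phi> r \<in> carrier QS" using ar r phc Sc' by auto
  have X: "(x1 \<oplus>\<^bsub>QR\<^esub> x2) \<otimes>\<^bsub>QR\<^esub> r \<otimes>\<^bsub>QR\<^esub> i =
      (x1 \<otimes>\<^bsub>QR\<^esub> r \<otimes>\<^bsub>QR\<^esub> a) \<otimes>\<^bsub>QR\<^esub> b \<oplus>\<^bsub>QR\<^esub> x2 \<otimes>\<^bsub>QR\<^esub> (r \<otimes>\<^bsub>QR\<^esub> a) \<otimes>\<^bsub>QR\<^esub> b"
    using x c ab(1) by (simp add: QR.l_distr QR.m_assoc)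
  show "(x1 \<oplus>\<^bsub>QR\<^esub> x2) \<otimes>\<^bsub>QR\<^esub> r \<otimes>\<^bsub>QR\<^esub> i \<in> carrier R"
    using X m1 m2 ar Rm Ra by simp
  have Y: "(y1 \<oplus>\<^bsub>QS\<^esub> y2) \<otimes>\<^bsub>QS\<^esub> \<phi> r \<otimes>\<^bsub>QS\<^esub> \<phi> i =
      (y1 \<otimes>\<^bsub>QS\<^esub> \<phi> r \<otimes>\<^bsub>QS\<^esub> \<phi> a) \<otimes>\<^bsub>QS\<^esub> \<phi> b \<oplus>\<^bsub>QS\<^esub> y2 \<otimes>\<^bsub>QS\<^esub> \<phi> (r \<otimes>\<^bsub>QR\<^esub> a) \<otimes>\<^bsub>QS\<^esub> \<phi> b"
    using y pc ab(1) ar r by (simp add: QS.l_distr QS.m_assoc phm)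
  show "(y1 \<oplus>\<^bsub>QS\<^esub> y2) \<otimes>\<^bsub>QS\<^esub> \<phi> r \<otimes>\<^bsub>QS\<^esub> \<phi> i = \<phi> ((x1 \<oplus>\<^bsub>QR\<^esub> x2) \<otimes>\<^bsub>QR\<^esub> r \<otimes>\<^bsub>QR\<^esub> i)"
    unfolding Y X e1 e2 using m1 m2 ar by (simp add: phm pha Rm)
qed

lemma good_mult:
  assumes g1: "good x1 y1 I1" and g2: "good x2 y2 I2"
    and x: "x1 \<in> carrier QR" "x2 \<in> carrier QR" and y: "y1 \<in> carrier QS" "y2 \<in> carrier QS"
  shows "good (x1 \<otimes>\<^bsub>QR\<^esub> x2) (y1 \<otimes>\<^bsub>QS\<^esub> y2) (prods I2 I1)"
  unfolding good_def
proof (intro conjI ballI)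
  have s1: "I1 \<subseteq> carrier R" and s2: "I2 \<subseteq> carrier R" using g1 g2 unfolding good_def by auto
  show "prods I2 I1 \<subseteq> carrier R" using prods_sub[OF s2 s1] .
  show "faithful (prods I2 I1)" using faithful_prods s1 s2 g1 g2 unfolding good_def by auto
  fix i r assume i: "i \<in> prods I2 I1" and r: "r \<in> carrier R"
  then obtain a b where ab: "i = a \<otimes>\<^bsub>QR\<^esub> b" "a \<in> I2" "b \<in> I1" unfolding prods_def by blast
  have ar: "a \<in> carrier R" "b \<in> carrier R" using ab s1 s2 by auto
  have m2: "x2 \<otimes>\<^bsub>QR\<^esub> r \<otimes>\<^bsub>QR\<^esub> a \<in> carrier R"
    and e2: "y2 \<otimes>\<^bsub>QS\<^esub> \<phi> r \<otimes>\<^bsub>QS\<^esub> \<phi> a = \<phi> (x2 \<otimes>\<^bsub>QR\<^esub> r \<otimes>\<^bsub>QR\<^esub> a)"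
    using g2 ab r unfolding good_def by auto
  have m1: "x1 \<otimes>\<^bsub>QR\<^esub> (x2 \<otimes>\<^bsub>QR\<^esub> r \<otimes>\<^bsub>QR\<^esub> a) \<otimes>\<^bsub>QR\<^esub> b \<in> carrier R"
    and e1: "y1 \<otimes>\<^bsub>QS\<^esub> \<phi> (x2 \<otimes>\<^bsub>QR\<^esub> r \<otimes>\<^bsub>QR\<^esub> a) \<otimes>\<^bsub>QS\<^esub> \<phi> b = \<phi> (x1 \<otimes>\<^bsub>QR\<^esub> (x2 \<otimes>\<^bsub>QR\<^esub> r \<otimes>\<^bsub>QR\<^esub> a) \<otimes>\<^bsub>QR\<^esub> b)"
    using g1 ab m2 unfolding good_def by auto
  have c: "a \<in> carrier QR" "b \<in> carrier QR" "r \<in> carrier QR" using ar r Rc' by auto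
  have pc: "\<phi> a \<in> carrier QS" "\<phi> b \<in> carrier QS" "\<phi> r \<in> carrier QS" using ar r phc Sc' by auto
  have X: "(x1 \<otimes>\<^bsub>QR\<^esub> x2) \<otimes>\<^bsub>QR\<^esub> r \<otimes>\<^bsub>QR\<^esub> i = x1 \<otimes>\<^bsub>QR\<^esub> (x2 \<otimes>\<^bsub>QR\<^esub> r \<otimes>\<^bsub>QR\<^esub> a) \<otimes>\<^bsub>QR\<^esub> b"
    using x c ab(1) by (simp add: QR.m_assoc)
  have Y: "(y1 \<otimes>\<^bsub>QS\<^esub> y2) \<otimes>\<^bsub>QS\<^esub> \<phi> r \<otimes>\<^bsub>QS\<^esub> \<phi> i = y1 \<otimes>\<^bsub>QS\<^esub> (y2 \<otimes>\<^bsub>QS\<^esub> \<phi> r \<otimes>\<^bsub>QS\<^esub> \<phi> a) \<otimes>\<^bsub>QS\<^esub> \<phi> b"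
    using y pc ab(1) ar by (simp add: QS.m_assoc phm)
  show "(x1 \<otimes>\<^bsub>QR\<^esub> x2) \<otimes>\<^bsub>QR\<^esub> r \<otimes>\<^bsub>QR\<^esub> i \<in> carrier R" using X m1 by simp
  show "(y1 \<otimes>\<^bsub>QS\<^esub> y2) \<otimes>\<^bsub>QS\<^esub> \<phi> r \<otimes>\<^bsub>QS\<^esub> \<phi> i = \<phi> ((x1 \<otimes>\<^bsub>QR\<^esub> x2) \<otimes>\<^bsub>QR\<^esub> r \<otimes>\<^bsub>QR\<^esub> i)"
    unfolding X Y e2 e1 ..
qed

lemma QS_eq0: "a \<in> carrier QS \<Longrightarrow> b \<in> carrier QS \<Longrightarrow> a \<oplus>\<^bsub>QS\<^esub> \<ominus>\<^bsub>QS\<^esub> b = \<zero>\<^bsub>QS\<^esub> \<Longrightarrow> a = b"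
  by (metis QS.add.inv_closed QS.minus_equality QS.minus_minus)

lemma good_unique:
  assumes g1: "good x y1 I1" and g2: "good x y2 I2"
    and x: "x \<in> carrier QR" and y: "y1 \<in> carrier QS" "y2 \<in> carrier QS"
  shows "y1 = y2"
proof -
  have s1: "I1 \<subseteq> carrier R" and s2: "I2 \<subseteq> carrier R" using g1 g2 unfolding good_def by auto
  have f: "faithful (prods I1 I2)" using faithful_prods s1 s2 g1 g2 unfolding good_def by auto
  let ?z = "y1 \<oplus>\<^bsub>QS\<^esub> \<ominus>\<^bsub>QS\<^esub> y2"
  have zc: "?z \<in> carrier QS" using y by simp
  have "\<forall>i\<in>prods I1 I2. ?z \<otimes>\<^bsub>QS\<^esub> \<phi> i = \<zero>\<^bsub>QS\<^esub>"
  proof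
    fix i assume "i \<in> prods I1 I2"
    then obtain a b where ab: "i = a \<otimes>\<^bsub>QR\<^esub> b" "a \<in> I1" "b \<in> I2" unfolding prods_def by blast
    have ar: "a \<in> carrier R" "b \<in> carrier R" using ab s1 s2 by auto
    have pc: "\<phi> a \<in> carrier QS" "\<phi> b \<in> carrier QS" using ar phc Sc' by auto
    have "y1 \<otimes>\<^bsub>QS\<^esub> \<phi> \<one>\<^bsub>QR\<^esub> \<otimes>\<^bsub>QS\<^esub> \<phi> a = \<phi> (x \<otimes>\<^bsub>QR\<^esub> \<one>\<^bsub>QR\<^esub> \<otimes>\<^bsub>QR\<^esub> a)"
      and xa: "x \<otimes>\<^bsub>QR\<^esub> \<one>\<^bsub>QR\<^esub> \<otimes>\<^bsub>QR\<^esub> a \<in> carrier R"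
      using g1 ab R1 unfolding good_def by auto
    then have e1: "y1 \<otimes>\<^bsub>QS\<^esub> \<phi> a = \<phi> (x \<otimes>\<^bsub>QR\<^esub> a)" and xa': "x \<otimes>\<^bsub>QR\<^esub> a \<in> carrier R"
      using ph1 x y by auto
    have e2: "y2 \<otimes>\<^bsub>QS\<^esub> \<phi> a \<otimes>\<^bsub>QS\<^esub> \<phi> b = \<phi> (x \<otimes>\<^bsub>QR\<^esub> a \<otimes>\<^bsub>QR\<^esub> b)"
      using g2 ab ar unfolding good_def by auto
    have "y1 \<otimes>\<^bsub>QS\<^esub> \<phi> i = \<phi> (x \<otimes>\<^bsub>QR\<^esub> a \<otimes>\<^bsub>QR\<^esub> b)"
      using ab(1) ar pc y xa' e1 by (simp add: phm QS.m_assoc[symmetric])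
    moreover have "y2 \<otimes>\<^bsub>QS\<^esub> \<phi> i = \<phi> (x \<otimes>\<^bsub>QR\<^esub> a \<otimes>\<^bsub>QR\<^esub> b)"
      using ab(1) ar pc y e2 by (simp add: phm QS.m_assoc)
    ultimately show "?z \<otimes>\<^bsub>QS\<^esub> \<phi> i = \<zero>\<^bsub>QS\<^esub>"
      using y ab(1) ar xa' by (simp add: QS.l_distr QS.l_minus phc Sc' Rm QS.r_neg)
  qed
  then have "?z = \<zero>\<^bsub>QS\<^esub>" using f zc unfolding faithful_def by blast
  then show ?thesis using QS_eq0 y by blast
qed

lemmas sqS_parts = sqS[unfolded sym_quot_def]
lemmas sqS_i0 = conjunct1[OF conjunct2[OF conjunct2[OF conjunct2[OF sqS_parts]]]]
lemmas sqS_ii0 = conjunct1[OF conjunct2[OF conjunct2[OF conjunct2[OF conjunct2[OF sqS_parts]]]]]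
lemmas sqS_iii0 = conjunct2[OF conjunct2[OF conjunct2[OF conjunct2[OF conjunct2[OF sqS_parts]]]]]
lemma sqS_i: "p \<in> carrier QS \<Longrightarrow> \<exists>I\<in>dense_ideals S. \<forall>x\<in>I. p \<otimes>\<^bsub>QS\<^esub> x \<in> carrier S \<and> x \<otimes>\<^bsub>QS\<^esub> p \<in> carrier S"
  using sqS_i0 by blast
lemma sqS_ii: "z \<in> carrier QS \<Longrightarrow> I \<in> dense_ideals S \<Longrightarrow> \<forall>x\<in>I. z \<otimes>\<^bsub>QS\<^esub> x = \<zero>\<^bsub>QS\<^esub> \<Longrightarrow> z = \<zero>\<^bsub>QS\<^esub>"
  using sqS_ii0 by blast
lemma sqS_iii:
  assumes "I \<in> dense_ideals S" "f \<in> I \<rightarrow> carrier S"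
    "\<forall>x\<in>I. \<forall>y\<in>I. f (x \<oplus>\<^bsub>QS\<^esub> y) = f x \<oplus>\<^bsub>QS\<^esub> f y"
    "\<forall>x\<in>I. \<forall>r\<in>carrier S. f (x \<otimes>\<^bsub>QS\<^esub> r) = f x \<otimes>\<^bsub>QS\<^esub> r \<and> f (r \<otimes>\<^bsub>QS\<^esub> x) = r \<otimes>\<^bsub>QS\<^esub> f x"
    "\<forall>x\<in>I. \<forall>y\<in>I. x \<otimes>\<^bsub>QS\<^esub> f y = f x \<otimes>\<^bsub>QS\<^esub> y"
  shows "\<exists>q\<in>carrier QS. \<forall>x\<in>I. q \<otimes>\<^bsub>QS\<^esub> x = f x \<and> x \<otimes>\<^bsub>QS\<^esub> q = f x"
proof -
  have "\<forall>I \<in> dense_ideals S. \<forall>f g.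
        f \<in> I \<rightarrow> carrier S \<and> g \<in> I \<rightarrow> carrier S \<and>
        (\<forall>x \<in> I. \<forall>y \<in> I. f (x \<oplus>\<^bsub>S\<^esub> y) = f x \<oplus>\<^bsub>S\<^esub> f y \<and> g (x \<oplus>\<^bsub>S\<^esub> y) = g x \<oplus>\<^bsub>S\<^esub> g y) \<and>
        (\<forall>x \<in> I. \<forall>r \<in> carrier S. f (x \<otimes>\<^bsub>S\<^esub> r) = f x \<otimes>\<^bsub>S\<^esub> r \<and> g (r \<otimes>\<^bsub>S\<^esub> x) = r \<otimes>\<^bsub>S\<^esub> g x) \<and>
        (\<forall>x \<in> I. \<forall>y \<in> I. x \<otimes>\<^bsub>S\<^esub> f y = g x \<otimes>\<^bsub>S\<^esub> y)
        \<longrightarrow> (\<exists>q \<in> carrier QS. \<forall>x \<in> I. q \<otimes>\<^bsub>QS\<^esub> x = f x \<and> x \<otimes>\<^bsub>QS\<^esub> q = g x)"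
    by (rule sqS_iii0)
  from this[rule_format, of I f f] assms show ?thesis by simp
qed

lemma dense_sub: "I \<in> dense_ideals S \<Longrightarrow> I \<subseteq> carrier S"
proof
  fix x assume "I \<in> dense_ideals S" "x \<in> I"
  then show "x \<in> carrier S" unfolding dense_ideals_def using ideal.Icarr[of I S x] by simp
qed

end

locale Lq = L +
  fixes q
  assumes q: "q \<in> C_phi R QR S \<phi>"
begin

definition D where "D = Dq R QR q"
definition J where "J = genideal S (\<phi> ` D)"

lemma qc: "q \<in> carrier QR" using q unfolding C_phi_def ext_center_def ring_centralizer_def by auto
lemma qcomm: "a \<in> carrier QR \<Longrightarrow> q \<otimes>\<^bsub>QR\<^esub> a = a \<otimes>\<^bsub>QR\<^esub> q"
  using q unfolding C_phi_def ext_center_def ring_centralizer_def by auto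
lemma Jdense: "J \<in> dense_ideals S" using q unfolding C_phi_def J_def D_def by auto
lemma Jsub: "J \<subseteq> carrier S" using dense_sub Jdense by blast
lemma Jideal: "ideal J S" using Jdense unfolding dense_ideals_def by auto
lemma Dsub: "D \<subseteq> carrier R" unfolding D_def Dq_def by auto
lemma Dc: "d \<in> D \<Longrightarrow> d \<in> carrier R" using Dsub by auto
lemma D_qrd: "d \<in> D \<Longrightarrow> r \<in> carrier R \<Longrightarrow> q \<otimes>\<^bsub>QR\<^esub> r \<otimes>\<^bsub>QR\<^esub> d \<in> carrier R"
  unfolding D_def Dq_def sandwich_def by blast
lemma D_drq: "d \<in> D \<Longrightarrow> r \<in> carrier R \<Longrightarrow> d \<otimes>\<^bsub>QR\<^esub> r \<otimes>\<^bsub>QR\<^esub> q \<in> carrier R"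
  unfolding D_def Dq_def sandwich_def by blast
lemma D_qd: "d \<in> D \<Longrightarrow> q \<otimes>\<^bsub>QR\<^esub> d \<in> carrier R"
  using D_qrd[OF _ R1] qc by simp
lemma D_dq: "d \<in> D \<Longrightarrow> d \<otimes>\<^bsub>QR\<^esub> q \<in> carrier R"
  using D_drq[OF _ R1] Dc Rc' by simp
lemma D_left: assumes d: "d \<in> D" and r: "r \<in> carrier R" shows "r \<otimes>\<^bsub>QR\<^esub> d \<in> D"
proof -
  have dr: "d \<in> carrier R" using Dc d by auto
  have "q \<otimes>\<^bsub>QR\<^esub> x \<otimes>\<^bsub>QR\<^esub> (r \<otimes>\<^bsub>QR\<^esub> d) \<in> carrier R" if x: "x \<in> carrier R" for x
  proof -
    have "q \<otimes>\<^bsub>QR\<^esub> x \<otimes>\<^bsub>QR\<^esub> (r \<otimes>\<^bsub>QR\<^esub> d) = q \<otimes>\<^bsub>QR\<^esub> (x \<otimes>\<^bsub>QR\<^esub> r) \<otimes>\<^bsub>QR\<^esub> d"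
      using x r dr qc by (simp add: QR.m_assoc Rc')
    then show ?thesis using D_qrd[OF d Rm[OF x r]] by simp
  qed
  moreover have "(r \<otimes>\<^bsub>QR\<^esub> d) \<otimes>\<^bsub>QR\<^esub> x \<otimes>\<^bsub>QR\<^esub> q \<in> carrier R" if x: "x \<in> carrier R" for x
  proof -
    have "(r \<otimes>\<^bsub>QR\<^esub> d) \<otimes>\<^bsub>QR\<^esub> x \<otimes>\<^bsub>QR\<^esub> q = r \<otimes>\<^bsub>QR\<^esub> (d \<otimes>\<^bsub>QR\<^esub> x \<otimes>\<^bsub>QR\<^esub> q)"
      using x r dr qc by (simp add: QR.m_assoc Rc')
    then show ?thesis using D_drq[OF d x] Rm r by simp
  qed
  ultimately show ?thesis unfolding D_def Dq_def sandwich_def using Rm[OF r dr] by auto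
qed
lemma phD_J: "\<phi> ` D \<subseteq> J"
  unfolding J_def using ring.genideal_self[OF S] phc Dsub by blast

lemma faithD: "faithful D"
proof -
  have A1: "\<forall>z'\<in>carrier QS. (\<forall>d\<in>D. z' \<otimes>\<^bsub>QS\<^esub> \<phi> d = \<zero>\<^bsub>QS\<^esub>) \<longrightarrow> (\<forall>d\<in>D. z' \<otimes>\<^bsub>QS\<^esub> a \<otimes>\<^bsub>QS\<^esub> \<phi> d = \<zero>\<^bsub>QS\<^esub>)"
    if a: "a \<in> carrier S" for a
    using a
  proof (induction rule: S_induct)
    case one then show ?case by simp
  next
    case (phi r)
    show ?case
    proof (intro ballI impI)
      fix z' d assume z': "z' \<in> carrier QS" and h: "\<forall>d\<in>D. z' \<otimes>\<^bsub>QS\<^esub> \<phi> d = \<zero>\<^bsub>QS\<^esub>" and d: "d \<in> D"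
      have "z' \<otimes>\<^bsub>QS\<^esub> \<phi> r \<otimes>\<^bsub>QS\<^esub> \<phi> d = z' \<otimes>\<^bsub>QS\<^esub> \<phi> (r \<otimes>\<^bsub>QR\<^esub> d)"
        using z' phi Dc[OF d] by (simp add: QS.m_assoc phm phc Sc')
      then show "z' \<otimes>\<^bsub>QS\<^esub> \<phi> r \<otimes>\<^bsub>QS\<^esub> \<phi> d = \<zero>\<^bsub>QS\<^esub>" using h D_left[OF d phi] by simp
    qed
  next
    case (cen c)
    show ?case
    proof (intro ballI impI)
      fix z' d assume z': "z' \<in> carrier QS" and h: "\<forall>d\<in>D. z' \<otimes>\<^bsub>QS\<^esub> \<phi> d = \<zero>\<^bsub>QS\<^esub>" and d: "d \<in> D"
      have cc: "c \<in> carrier QS" using cen Cset_c Sc' by blast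
      have pd: "\<phi> d \<in> carrier QS" using Dc[OF d] phc Sc' by blast
      have "z' \<otimes>\<^bsub>QS\<^esub> c \<otimes>\<^bsub>QS\<^esub> \<phi> d = z' \<otimes>\<^bsub>QS\<^esub> \<phi> d \<otimes>\<^bsub>QS\<^esub> c"
        using z' cc pd Cset_comm[OF cen Dc[OF d]] by (simp add: QS.m_assoc)
      then show "z' \<otimes>\<^bsub>QS\<^esub> c \<otimes>\<^bsub>QS\<^esub> \<phi> d = \<zero>\<^bsub>QS\<^esub>" using h d cc by simp
    qed
  next
    case (neg a)
    show ?case
    proof (intro ballI impI)
      fix z' d assume z': "z' \<in> carrier QS" and h: "\<forall>d\<in>D. z' \<otimes>\<^bsub>QS\<^esub> \<phi> d = \<zero>\<^bsub>QS\<^esub>" and d: "d \<in> D"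
      have ac: "a \<in> carrier QS" using neg Sc' by blast
      have pd: "\<phi> d \<in> carrier QS" using Dc[OF d] phc Sc' by blast
      have "z' \<otimes>\<^bsub>QS\<^esub> (\<ominus>\<^bsub>QS\<^esub> a) \<otimes>\<^bsub>QS\<^esub> \<phi> d = \<ominus>\<^bsub>QS\<^esub> (z' \<otimes>\<^bsub>QS\<^esub> a \<otimes>\<^bsub>QS\<^esub> \<phi> d)"
        using z' ac pd by (simp add: QS.r_minus QS.l_minus)
      moreover have "z' \<otimes>\<^bsub>QS\<^esub> a \<otimes>\<^bsub>QS\<^esub> \<phi> d = \<zero>\<^bsub>QS\<^esub>" using neg(2) z' h d by blast
      ultimately show "z' \<otimes>\<^bsub>QS\<^esub> (\<ominus>\<^bsub>QS\<^esub> a) \<otimes>\<^bsub>QS\<^esub> \<phi> d = \<zero>\<^bsub>QS\<^esub>" by simp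
    qed
  next
    case (add a b)
    show ?case
    proof (intro ballI impI)
      fix z' d assume z': "z' \<in> carrier QS" and h: "\<forall>d\<in>D. z' \<otimes>\<^bsub>QS\<^esub> \<phi> d = \<zero>\<^bsub>QS\<^esub>" and d: "d \<in> D"
      have ac: "a \<in> carrier QS" "b \<in> carrier QS" using add Sc' by auto
      have pd: "\<phi> d \<in> carrier QS" using Dc[OF d] phc Sc' by blast
      have "z' \<otimes>\<^bsub>QS\<^esub> (a \<oplus>\<^bsub>QS\<^esub> b) \<otimes>\<^bsub>QS\<^esub> \<phi> d = z' \<otimes>\<^bsub>QS\<^esub> a \<otimes>\<^bsub>QS\<^esub> \<phi> d \<oplus>\<^bsub>QS\<^esub> z' \<otimes>\<^bsub>QS\<^esub> b \<otimes>\<^bsub>QS\<^esub> \<phi> d"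
        using z' ac pd by (simp add: QS.r_distr QS.l_distr)
      moreover have "z' \<otimes>\<^bsub>QS\<^esub> a \<otimes>\<^bsub>QS\<^esub> \<phi> d = \<zero>\<^bsub>QS\<^esub>" using add(3) z' h d by blast
      moreover have "z' \<otimes>\<^bsub>QS\<^esub> b \<otimes>\<^bsub>QS\<^esub> \<phi> d = \<zero>\<^bsub>QS\<^esub>" using add(4) z' h d by blast
      ultimately show "z' \<otimes>\<^bsub>QS\<^esub> (a \<oplus>\<^bsub>QS\<^esub> b) \<otimes>\<^bsub>QS\<^esub> \<phi> d = \<zero>\<^bsub>QS\<^esub>" by simp
    qed
  next
    case (mult a b)
    show ?case
    proof (intro ballI impI)
      fix z' d assume z': "z' \<in> carrier QS" and h: "\<forall>d\<in>D. z' \<otimes>\<^bsub>QS\<^esub> \<phi> d = \<zero>\<^bsub>QS\<^esub>" and d: "d \<in> D"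
      have ac: "a \<in> carrier QS" "b \<in> carrier QS" using mult Sc' by auto
      have pd: "\<phi> d \<in> carrier QS" using Dc[OF d] phc Sc' by blast
      have za: "z' \<otimes>\<^bsub>QS\<^esub> a \<in> carrier QS" using z' ac by simp
      have "\<forall>d\<in>D. (z' \<otimes>\<^bsub>QS\<^esub> a) \<otimes>\<^bsub>QS\<^esub> \<phi> d = \<zero>\<^bsub>QS\<^esub>" using mult(3) z' h by blast
      then have "\<forall>d\<in>D. (z' \<otimes>\<^bsub>QS\<^esub> a) \<otimes>\<^bsub>QS\<^esub> b \<otimes>\<^bsub>QS\<^esub> \<phi> d = \<zero>\<^bsub>QS\<^esub>" using mult(4) za by blast
      moreover have "z' \<otimes>\<^bsub>QS\<^esub> (a \<otimes>\<^bsub>QS\<^esub> b) \<otimes>\<^bsub>QS\<^esub> \<phi> d = (z' \<otimes>\<^bsub>QS\<^esub> a) \<otimes>\<^bsub>QS\<^esub> b \<otimes>\<^bsub>QS\<^esub> \<phi> d"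
        using z' ac pd by (simp add: QS.m_assoc)
      ultimately show "z' \<otimes>\<^bsub>QS\<^esub> (a \<otimes>\<^bsub>QS\<^esub> b) \<otimes>\<^bsub>QS\<^esub> \<phi> d = \<zero>\<^bsub>QS\<^esub>" using d by simp
    qed
  qed
  show ?thesis unfolding faithful_def
  proof (intro ballI impI)
    fix z assume z: "z \<in> carrier QS" and h: "\<forall>d\<in>D. z \<otimes>\<^bsub>QS\<^esub> \<phi> d = \<zero>\<^bsub>QS\<^esub>"
    define K where "K = {s \<in> carrier S. \<forall>a\<in>carrier S. z \<otimes>\<^bsub>QS\<^esub> (a \<otimes>\<^bsub>QS\<^esub> s) = \<zero>\<^bsub>QS\<^esub>}"
    have "ideal K S"
    proof (rule idealS)
      show "K \<subseteq> carrier S" unfolding K_def by auto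
      show "\<zero>\<^bsub>QS\<^esub> \<in> K" unfolding K_def using S0 z Sc' by auto
      fix a b x
      show "a \<in> K \<Longrightarrow> b \<in> K \<Longrightarrow> a \<oplus>\<^bsub>QS\<^esub> b \<in> K"
      proof -
        assume a: "a \<in> K" and b: "b \<in> K"
        have ac: "a \<in> carrier S" "b \<in> carrier S" using a b unfolding K_def by auto
        have "z \<otimes>\<^bsub>QS\<^esub> (c \<otimes>\<^bsub>QS\<^esub> (a \<oplus>\<^bsub>QS\<^esub> b)) = \<zero>\<^bsub>QS\<^esub>" if c: "c \<in> carrier S" for c
        proof -
          have "z \<otimes>\<^bsub>QS\<^esub> (c \<otimes>\<^bsub>QS\<^esub> (a \<oplus>\<^bsub>QS\<^esub> b)) = z \<otimes>\<^bsub>QS\<^esub> (c \<otimes>\<^bsub>QS\<^esub> a) \<oplus>\<^bsub>QS\<^esub> z \<otimes>\<^bsub>QS\<^esub> (c \<otimes>\<^bsub>QS\<^esub> b)"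
            using z c ac by (simp add: QS.r_distr Sc')
          then show ?thesis using a b c unfolding K_def by simp
        qed
        then show ?thesis unfolding K_def using ac Sa by auto
      qed
      show "a \<in> K \<Longrightarrow> \<ominus>\<^bsub>QS\<^esub> a \<in> K"
      proof -
        assume a: "a \<in> K"
        have ac: "a \<in> carrier S" using a unfolding K_def by auto
        have "z \<otimes>\<^bsub>QS\<^esub> (c \<otimes>\<^bsub>QS\<^esub> (\<ominus>\<^bsub>QS\<^esub> a)) = \<zero>\<^bsub>QS\<^esub>" if c: "c \<in> carrier S" for c
        proof -
          have "z \<otimes>\<^bsub>QS\<^esub> (c \<otimes>\<^bsub>QS\<^esub> (\<ominus>\<^bsub>QS\<^esub> a)) = \<ominus>\<^bsub>QS\<^esub> (z \<otimes>\<^bsub>QS\<^esub> (c \<otimes>\<^bsub>QS\<^esub> a))"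
            using z c ac by (simp add: QS.r_minus Sc')
          then show ?thesis using a c unfolding K_def by simp
        qed
        then show ?thesis unfolding K_def using ac Sn by auto
      qed
      show "a \<in> K \<Longrightarrow> x \<in> carrier S \<Longrightarrow> x \<otimes>\<^bsub>QS\<^esub> a \<in> K"
      proof -
        assume a: "a \<in> K" and x: "x \<in> carrier S"
        have ac: "a \<in> carrier S" using a unfolding K_def by auto
        have "z \<otimes>\<^bsub>QS\<^esub> (c \<otimes>\<^bsub>QS\<^esub> (x \<otimes>\<^bsub>QS\<^esub> a)) = \<zero>\<^bsub>QS\<^esub>" if c: "c \<in> carrier S" for c
        proof -
          have "c \<otimes>\<^bsub>QS\<^esub> (x \<otimes>\<^bsub>QS\<^esub> a) = (c \<otimes>\<^bsub>QS\<^esub> x) \<otimes>\<^bsub>QS\<^esub> a"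
            using x c ac by (simp add: QS.m_assoc Sc')
          then show ?thesis using a Sm[OF c x] unfolding K_def by simp
        qed
        then show ?thesis unfolding K_def using ac x Sm by auto
      qed
      show "a \<in> K \<Longrightarrow> x \<in> carrier S \<Longrightarrow> a \<otimes>\<^bsub>QS\<^esub> x \<in> K"
      proof -
        assume a: "a \<in> K" and x: "x \<in> carrier S"
        have ac: "a \<in> carrier S" using a unfolding K_def by auto
        have "z \<otimes>\<^bsub>QS\<^esub> (c \<otimes>\<^bsub>QS\<^esub> (a \<otimes>\<^bsub>QS\<^esub> x)) = \<zero>\<^bsub>QS\<^esub>" if c: "c \<in> carrier S" for c
        proof -
          have "z \<otimes>\<^bsub>QS\<^esub> (c \<otimes>\<^bsub>QS\<^esub> (a \<otimes>\<^bsub>QS\<^esub> x)) = (z \<otimes>\<^bsub>QS\<^esub> (c \<otimes>\<^bsub>QS\<^esub> a)) \<otimes>\<^bsub>QS\<^esub> x"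
            using z x c ac by (simp add: QS.m_assoc Sc')
          then show ?thesis using a c x unfolding K_def by (simp add: Sc')
        qed
        then show ?thesis unfolding K_def using ac x Sm by auto
      qed
    qed
    moreover have "\<phi> ` D \<subseteq> K" unfolding K_def
    proof (safe)
      fix d assume d: "d \<in> D"
      show "\<phi> d \<in> carrier S" using phc Dc d by blast
      fix a assume a: "a \<in> carrier S"
      have "z \<otimes>\<^bsub>QS\<^esub> a \<otimes>\<^bsub>QS\<^esub> \<phi> d = \<zero>\<^bsub>QS\<^esub>" using A1[OF a] z h d by blast
      then show "z \<otimes>\<^bsub>QS\<^esub> (a \<otimes>\<^bsub>QS\<^esub> \<phi> d) = \<zero>\<^bsub>QS\<^esub>"
        using z a d by (simp add: QS.m_assoc Sc' phc Dc)
    qed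
    ultimately have "J \<subseteq> K" unfolding J_def using ring.genideal_minimal[OF S] by blast
    then have "\<forall>x\<in>J. z \<otimes>\<^bsub>QS\<^esub> x = \<zero>\<^bsub>QS\<^esub>" unfolding K_def using S1 Sc' by force
    then show "z = \<zero>\<^bsub>QS\<^esub>" using sqS_ii z Jdense by blast
  qed
qed

lemma J_add: "x \<in> J \<Longrightarrow> y \<in> J \<Longrightarrow> x \<oplus>\<^bsub>QS\<^esub> y \<in> J"
  using additive_subgroup.a_closed[OF ideal.axioms(1)[OF Jideal]] by simp
lemma J_lm: "x \<in> J \<Longrightarrow> t \<in> carrier S \<Longrightarrow> t \<otimes>\<^bsub>QS\<^esub> x \<in> J"
  using ideal.I_l_closed[OF Jideal] by simp
lemma J_rm: "x \<in> J \<Longrightarrow> t \<in> carrier S \<Longrightarrow> x \<otimes>\<^bsub>QS\<^esub> t \<in> J"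
  using ideal.I_r_closed[OF Jideal] by simp
lemma Jc: "x \<in> J \<Longrightarrow> x \<in> carrier S" using Jsub by blast

definition fs :: "'b \<Rightarrow> 'b \<Rightarrow> bool" where
  "fs j s \<longleftrightarrow> s \<in> carrier S \<and> (\<forall>e\<in>D. s \<otimes>\<^bsub>QS\<^esub> \<phi> e = j \<otimes>\<^bsub>QS\<^esub> \<phi> (q \<otimes>\<^bsub>QR\<^esub> e))"

lemma De: assumes "e \<in> D" shows "e \<in> carrier R" "\<phi> e \<in> carrier QS" "q \<otimes>\<^bsub>QR\<^esub> e \<in> carrier R"
   "\<phi> (q \<otimes>\<^bsub>QR\<^esub> e) \<in> carrier QS" "e \<in> carrier QR" "\<phi> e \<in> carrier S" "\<phi> (q \<otimes>\<^bsub>QR\<^esub> e) \<in> carrier S"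
  using assms Dc D_qd phc Sc' Rc' by auto

lemma fs_unique: assumes "fs j s1" "fs j s2" shows "s1 = s2"
proof -
  have sc: "s1 \<in> carrier QS" "s2 \<in> carrier QS" using assms unfolding fs_def using Sc' by auto
  let ?z = "s1 \<oplus>\<^bsub>QS\<^esub> \<ominus>\<^bsub>QS\<^esub> s2"
  have "\<forall>e\<in>D. ?z \<otimes>\<^bsub>QS\<^esub> \<phi> e = \<zero>\<^bsub>QS\<^esub>"
  proof
    fix e assume e: "e \<in> D"
    have "?z \<otimes>\<^bsub>QS\<^esub> \<phi> e = s1 \<otimes>\<^bsub>QS\<^esub> \<phi> e \<oplus>\<^bsub>QS\<^esub> \<ominus>\<^bsub>QS\<^esub> (s2 \<otimes>\<^bsub>QS\<^esub> \<phi> e)"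
      using sc De[OF e] by (simp add: QS.l_distr QS.l_minus)
    also have "\<dots> = \<zero>\<^bsub>QS\<^esub>" using assms e unfolding fs_def
      by (metis QS.m_closed QS.r_neg sc(2) De(2)[OF e])
    finally show "?z \<otimes>\<^bsub>QS\<^esub> \<phi> e = \<zero>\<^bsub>QS\<^esub>" .
  qed
  then have "?z = \<zero>\<^bsub>QS\<^esub>" using faithD sc unfolding faithful_def by simp
  then show ?thesis using QS_eq0 sc by blast
qed

lemma fs_phi: assumes j: "j \<in> carrier S" and f: "fs j s" and r: "r \<in> carrier R"
  shows "fs (j \<otimes>\<^bsub>QS\<^esub> \<phi> r) (s \<otimes>\<^bsub>QS\<^esub> \<phi> r)"
  unfolding fs_def
proof (intro conjI ballI)
  have sS: "s \<in> carrier S" using f unfolding fs_def by auto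
  then show "s \<otimes>\<^bsub>QS\<^esub> \<phi> r \<in> carrier S" using Sm phc r by blast
  fix e assume e: "e \<in> D"
  have re: "r \<otimes>\<^bsub>QR\<^esub> e \<in> D" using D_left e r by blast
  have "s \<otimes>\<^bsub>QS\<^esub> \<phi> r \<otimes>\<^bsub>QS\<^esub> \<phi> e = s \<otimes>\<^bsub>QS\<^esub> \<phi> (r \<otimes>\<^bsub>QR\<^esub> e)"
    using sS r De[OF e] by (simp add: QS.m_assoc phm phc Sc')
  also have "\<dots> = j \<otimes>\<^bsub>QS\<^esub> \<phi> (q \<otimes>\<^bsub>QR\<^esub> (r \<otimes>\<^bsub>QR\<^esub> e))" using f re unfolding fs_def by blast
  also have "q \<otimes>\<^bsub>QR\<^esub> (r \<otimes>\<^bsub>QR\<^esub> e) = r \<otimes>\<^bsub>QR\<^esub> (q \<otimes>\<^bsub>QR\<^esub> e)"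
  proof -
    have "q \<otimes>\<^bsub>QR\<^esub> (r \<otimes>\<^bsub>QR\<^esub> e) = (q \<otimes>\<^bsub>QR\<^esub> r) \<otimes>\<^bsub>QR\<^esub> e"
      using qc r De[OF e] by (simp add: QR.m_assoc Rc')
    also have "\<dots> = (r \<otimes>\<^bsub>QR\<^esub> q) \<otimes>\<^bsub>QR\<^esub> e" using qcomm r Rc' by simp
    finally show ?thesis using qc r De[OF e] by (simp add: QR.m_assoc Rc')
  qed
  also have "j \<otimes>\<^bsub>QS\<^esub> \<phi> (r \<otimes>\<^bsub>QR\<^esub> (q \<otimes>\<^bsub>QR\<^esub> e)) = j \<otimes>\<^bsub>QS\<^esub> \<phi> r \<otimes>\<^bsub>QS\<^esub> \<phi> (q \<otimes>\<^bsub>QR\<^esub> e)"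
    using j r De[OF e] by (simp add: QS.m_assoc phm phc Sc')
  finally show "s \<otimes>\<^bsub>QS\<^esub> \<phi> r \<otimes>\<^bsub>QS\<^esub> \<phi> e = j \<otimes>\<^bsub>QS\<^esub> \<phi> r \<otimes>\<^bsub>QS\<^esub> \<phi> (q \<otimes>\<^bsub>QR\<^esub> e)" .
qed

lemma fs_c: assumes j: "j \<in> carrier S" and f: "fs j s" and c: "c \<in> Cset"
  shows "fs (j \<otimes>\<^bsub>QS\<^esub> c) (s \<otimes>\<^bsub>QS\<^esub> c)"
  unfolding fs_def
proof (intro conjI ballI)
  have sS: "s \<in> carrier S" using f unfolding fs_def by auto
  have cS: "c \<in> carrier S" using Cset_c c by blast
  then show "s \<otimes>\<^bsub>QS\<^esub> c \<in> carrier S" using Sm sS by blast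
  fix e assume e: "e \<in> D"
  have c1: "c \<otimes>\<^bsub>QS\<^esub> \<phi> e = \<phi> e \<otimes>\<^bsub>QS\<^esub> c" using Cset_comm[OF c] De[OF e] by blast
  have c2: "c \<otimes>\<^bsub>QS\<^esub> \<phi> (q \<otimes>\<^bsub>QR\<^esub> e) = \<phi> (q \<otimes>\<^bsub>QR\<^esub> e) \<otimes>\<^bsub>QS\<^esub> c" using Cset_comm[OF c] De[OF e] by blast
  have "s \<otimes>\<^bsub>QS\<^esub> c \<otimes>\<^bsub>QS\<^esub> \<phi> e = (s \<otimes>\<^bsub>QS\<^esub> \<phi> e) \<otimes>\<^bsub>QS\<^esub> c"
    using sS cS De[OF e] c1 by (simp add: QS.m_assoc Sc')
  also have "\<dots> = j \<otimes>\<^bsub>QS\<^esub> \<phi> (q \<otimes>\<^bsub>QR\<^esub> e) \<otimes>\<^bsub>QS\<^esub> c" using f e unfolding fs_def by simp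
  also have "\<dots> = j \<otimes>\<^bsub>QS\<^esub> c \<otimes>\<^bsub>QS\<^esub> \<phi> (q \<otimes>\<^bsub>QR\<^esub> e)"
    using j cS De[OF e] c2 by (simp add: QS.m_assoc Sc')
  finally show "s \<otimes>\<^bsub>QS\<^esub> c \<otimes>\<^bsub>QS\<^esub> \<phi> e = j \<otimes>\<^bsub>QS\<^esub> c \<otimes>\<^bsub>QS\<^esub> \<phi> (q \<otimes>\<^bsub>QR\<^esub> e)" .
qed

lemma fs_neg: assumes j: "j \<in> carrier S" and f: "fs j s" shows "fs (\<ominus>\<^bsub>QS\<^esub> j) (\<ominus>\<^bsub>QS\<^esub> s)"
  unfolding fs_def
proof (intro conjI ballI)
  have sS: "s \<in> carrier S" using f unfolding fs_def by auto
  then show "\<ominus>\<^bsub>QS\<^esub> s \<in> carrier S" using Sn by blast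
  fix e assume e: "e \<in> D"
  have "\<ominus>\<^bsub>QS\<^esub> s \<otimes>\<^bsub>QS\<^esub> \<phi> e = \<ominus>\<^bsub>QS\<^esub> (s \<otimes>\<^bsub>QS\<^esub> \<phi> e)" using sS De[OF e] by (simp add: QS.l_minus Sc')
  also have "\<dots> = \<ominus>\<^bsub>QS\<^esub> (j \<otimes>\<^bsub>QS\<^esub> \<phi> (q \<otimes>\<^bsub>QR\<^esub> e))" using f e unfolding fs_def by simp
  also have "\<dots> = \<ominus>\<^bsub>QS\<^esub> j \<otimes>\<^bsub>QS\<^esub> \<phi> (q \<otimes>\<^bsub>QR\<^esub> e)" using j De[OF e] by (simp add: QS.l_minus Sc')
  finally show "\<ominus>\<^bsub>QS\<^esub> s \<otimes>\<^bsub>QS\<^esub> \<phi> e = \<ominus>\<^bsub>QS\<^esub> j \<otimes>\<^bsub>QS\<^esub> \<phi> (q \<otimes>\<^bsub>QR\<^esub> e)" .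
qed

lemma fs_add: assumes j: "j1 \<in> carrier S" "j2 \<in> carrier S" and f: "fs j1 s1" "fs j2 s2"
  shows "fs (j1 \<oplus>\<^bsub>QS\<^esub> j2) (s1 \<oplus>\<^bsub>QS\<^esub> s2)"
  unfolding fs_def
proof (intro conjI ballI)
  have sS: "s1 \<in> carrier S" "s2 \<in> carrier S" using f unfolding fs_def by auto
  then show "s1 \<oplus>\<^bsub>QS\<^esub> s2 \<in> carrier S" using Sa by blast
  fix e assume e: "e \<in> D"
  have "(s1 \<oplus>\<^bsub>QS\<^esub> s2) \<otimes>\<^bsub>QS\<^esub> \<phi> e = s1 \<otimes>\<^bsub>QS\<^esub> \<phi> e \<oplus>\<^bsub>QS\<^esub> s2 \<otimes>\<^bsub>QS\<^esub> \<phi> e"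
    using sS De[OF e] by (simp add: QS.l_distr Sc')
  also have "\<dots> = j1 \<otimes>\<^bsub>QS\<^esub> \<phi> (q \<otimes>\<^bsub>QR\<^esub> e) \<oplus>\<^bsub>QS\<^esub> j2 \<otimes>\<^bsub>QS\<^esub> \<phi> (q \<otimes>\<^bsub>QR\<^esub> e)"
    using f e unfolding fs_def by simp
  also have "\<dots> = (j1 \<oplus>\<^bsub>QS\<^esub> j2) \<otimes>\<^bsub>QS\<^esub> \<phi> (q \<otimes>\<^bsub>QR\<^esub> e)" using j De[OF e] by (simp add: QS.l_distr Sc')
  finally show "(s1 \<oplus>\<^bsub>QS\<^esub> s2) \<otimes>\<^bsub>QS\<^esub> \<phi> e = (j1 \<oplus>\<^bsub>QS\<^esub> j2) \<otimes>\<^bsub>QS\<^esub> \<phi> (q \<otimes>\<^bsub>QR\<^esub> e)" .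
qed

lemma fs_left: assumes t: "t \<in> carrier S" and j: "j \<in> carrier S" and f: "fs j s"
  shows "fs (t \<otimes>\<^bsub>QS\<^esub> j) (t \<otimes>\<^bsub>QS\<^esub> s)"
  unfolding fs_def
proof (intro conjI ballI)
  have sS: "s \<in> carrier S" using f unfolding fs_def by auto
  then show "t \<otimes>\<^bsub>QS\<^esub> s \<in> carrier S" using Sm t by blast
  fix e assume e: "e \<in> D"
  have "t \<otimes>\<^bsub>QS\<^esub> s \<otimes>\<^bsub>QS\<^esub> \<phi> e = t \<otimes>\<^bsub>QS\<^esub> (s \<otimes>\<^bsub>QS\<^esub> \<phi> e)" using sS t De[OF e] by (simp add: QS.m_assoc Sc')
  also have "\<dots> = t \<otimes>\<^bsub>QS\<^esub> (j \<otimes>\<^bsub>QS\<^esub> \<phi> (q \<otimes>\<^bsub>QR\<^esub> e))" using f e unfolding fs_def by simp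
  also have "\<dots> = t \<otimes>\<^bsub>QS\<^esub> j \<otimes>\<^bsub>QS\<^esub> \<phi> (q \<otimes>\<^bsub>QR\<^esub> e)" using j t De[OF e] by (simp add: QS.m_assoc Sc')
  finally show "t \<otimes>\<^bsub>QS\<^esub> s \<otimes>\<^bsub>QS\<^esub> \<phi> e = t \<otimes>\<^bsub>QS\<^esub> j \<otimes>\<^bsub>QS\<^esub> \<phi> (q \<otimes>\<^bsub>QR\<^esub> e)" .
qed

lemma fs_right_all: assumes t: "t \<in> carrier S"
  shows "\<forall>j s. j \<in> carrier S \<longrightarrow> fs j s \<longrightarrow> fs (j \<otimes>\<^bsub>QS\<^esub> t) (s \<otimes>\<^bsub>QS\<^esub> t)"
  using t
proof (induction rule: S_induct)
  case one then show ?case unfolding fs_def using Sc' by auto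
next
  case (phi r) then show ?case using fs_phi by blast
next
  case (cen c) then show ?case using fs_c by blast
next
  case (neg a)
  show ?case
  proof (intro allI impI)
    fix j s assume j: "j \<in> carrier S" and f: "fs j s"
    have sS: "s \<in> carrier S" using f unfolding fs_def by auto
    have "fs (j \<otimes>\<^bsub>QS\<^esub> a) (s \<otimes>\<^bsub>QS\<^esub> a)" using neg j f by blast
    then have "fs (\<ominus>\<^bsub>QS\<^esub> (j \<otimes>\<^bsub>QS\<^esub> a)) (\<ominus>\<^bsub>QS\<^esub> (s \<otimes>\<^bsub>QS\<^esub> a))" using fs_neg Sm j neg by blast
    moreover have "j \<otimes>\<^bsub>QS\<^esub> (\<ominus>\<^bsub>QS\<^esub> a) = \<ominus>\<^bsub>QS\<^esub> (j \<otimes>\<^bsub>QS\<^esub> a)" "s \<otimes>\<^bsub>QS\<^esub> (\<ominus>\<^bsub>QS\<^esub> a) = \<ominus>\<^bsub>QS\<^esub> (s \<otimes>\<^bsub>QS\<^esub> a)"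
      using j sS neg by (simp_all add: QS.r_minus Sc')
    ultimately show "fs (j \<otimes>\<^bsub>QS\<^esub> (\<ominus>\<^bsub>QS\<^esub> a)) (s \<otimes>\<^bsub>QS\<^esub> (\<ominus>\<^bsub>QS\<^esub> a))" by simp
  qed
next
  case (add a b)
  show ?case
  proof (intro allI impI)
    fix j s assume j: "j \<in> carrier S" and f: "fs j s"
    have sS: "s \<in> carrier S" using f unfolding fs_def by auto
    have "fs (j \<otimes>\<^bsub>QS\<^esub> a) (s \<otimes>\<^bsub>QS\<^esub> a)" "fs (j \<otimes>\<^bsub>QS\<^esub> b) (s \<otimes>\<^bsub>QS\<^esub> b)" using add j f by blast+
    then have "fs (j \<otimes>\<^bsub>QS\<^esub> a \<oplus>\<^bsub>QS\<^esub> j \<otimes>\<^bsub>QS\<^esub> b) (s \<otimes>\<^bsub>QS\<^esub> a \<oplus>\<^bsub>QS\<^esub> s \<otimes>\<^bsub>QS\<^esub> b)"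
      using fs_add Sm j add by blast
    moreover have "j \<otimes>\<^bsub>QS\<^esub> (a \<oplus>\<^bsub>QS\<^esub> b) = j \<otimes>\<^bsub>QS\<^esub> a \<oplus>\<^bsub>QS\<^esub> j \<otimes>\<^bsub>QS\<^esub> b"
      "s \<otimes>\<^bsub>QS\<^esub> (a \<oplus>\<^bsub>QS\<^esub> b) = s \<otimes>\<^bsub>QS\<^esub> a \<oplus>\<^bsub>QS\<^esub> s \<otimes>\<^bsub>QS\<^esub> b"
      using j sS add by (simp_all add: QS.r_distr Sc')
    ultimately show "fs (j \<otimes>\<^bsub>QS\<^esub> (a \<oplus>\<^bsub>QS\<^esub> b)) (s \<otimes>\<^bsub>QS\<^esub> (a \<oplus>\<^bsub>QS\<^esub> b))" by simp
  qed
next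
  case (mult a b)
  show ?case
  proof (intro allI impI)
    fix j s assume j: "j \<in> carrier S" and f: "fs j s"
    have sS: "s \<in> carrier S" using f unfolding fs_def by auto
    have "fs (j \<otimes>\<^bsub>QS\<^esub> a) (s \<otimes>\<^bsub>QS\<^esub> a)" using mult j f by blast
    then have "fs (j \<otimes>\<^bsub>QS\<^esub> a \<otimes>\<^bsub>QS\<^esub> b) (s \<otimes>\<^bsub>QS\<^esub> a \<otimes>\<^bsub>QS\<^esub> b)" using mult Sm j by blast
    moreover have "j \<otimes>\<^bsub>QS\<^esub> (a \<otimes>\<^bsub>QS\<^esub> b) = j \<otimes>\<^bsub>QS\<^esub> a \<otimes>\<^bsub>QS\<^esub> b"
      "s \<otimes>\<^bsub>QS\<^esub> (a \<otimes>\<^bsub>QS\<^esub> b) = s \<otimes>\<^bsub>QS\<^esub> a \<otimes>\<^bsub>QS\<^esub> b"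
      using j sS mult by (simp_all add: QS.m_assoc Sc')
    ultimately show "fs (j \<otimes>\<^bsub>QS\<^esub> (a \<otimes>\<^bsub>QS\<^esub> b)) (s \<otimes>\<^bsub>QS\<^esub> (a \<otimes>\<^bsub>QS\<^esub> b))" by simp
  qed
qed

lemma fs_right: "t \<in> carrier S \<Longrightarrow> j \<in> carrier S \<Longrightarrow> fs j s \<Longrightarrow> fs (j \<otimes>\<^bsub>QS\<^esub> t) (s \<otimes>\<^bsub>QS\<^esub> t)"
  using fs_right_all by blast

lemma fs_phiD: assumes d: "d \<in> D" shows "fs (\<phi> d) (\<phi> (d \<otimes>\<^bsub>QR\<^esub> q))"
  unfolding fs_def
proof (intro conjI ballI)
  show "\<phi> (d \<otimes>\<^bsub>QR\<^esub> q) \<in> carrier S" using phc D_dq d by blast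
  fix e assume e: "e \<in> D"
  have "\<phi> (d \<otimes>\<^bsub>QR\<^esub> q) \<otimes>\<^bsub>QS\<^esub> \<phi> e = \<phi> (d \<otimes>\<^bsub>QR\<^esub> q \<otimes>\<^bsub>QR\<^esub> e)"
    using D_dq[OF d] De[OF e] by (simp add: phm)
  also have "d \<otimes>\<^bsub>QR\<^esub> q \<otimes>\<^bsub>QR\<^esub> e = d \<otimes>\<^bsub>QR\<^esub> (q \<otimes>\<^bsub>QR\<^esub> e)"
    using De[OF d] De[OF e] qc by (simp add: QR.m_assoc)
  also have "\<phi> (d \<otimes>\<^bsub>QR\<^esub> (q \<otimes>\<^bsub>QR\<^esub> e)) = \<phi> d \<otimes>\<^bsub>QS\<^esub> \<phi> (q \<otimes>\<^bsub>QR\<^esub> e)"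
    using De[OF d] De[OF e] by (simp add: phm)
  finally show "\<phi> (d \<otimes>\<^bsub>QR\<^esub> q) \<otimes>\<^bsub>QS\<^esub> \<phi> e = \<phi> d \<otimes>\<^bsub>QS\<^esub> \<phi> (q \<otimes>\<^bsub>QR\<^esub> e)" .
qed

lemma fs_ex: assumes j: "j \<in> J" shows "\<exists>s. fs j s"
proof -
  define K where "K = {j \<in> carrier S. \<exists>s. fs j s}"
  have "ideal K S"
  proof (rule idealS)
    show "K \<subseteq> carrier S" unfolding K_def by auto
    show "\<zero>\<^bsub>QS\<^esub> \<in> K" unfolding K_def fs_def using S0 De by auto
    fix a b x
    show "a \<in> K \<Longrightarrow> b \<in> K \<Longrightarrow> a \<oplus>\<^bsub>QS\<^esub> b \<in> K" unfolding K_def using fs_add Sa by blast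
    show "a \<in> K \<Longrightarrow> \<ominus>\<^bsub>QS\<^esub> a \<in> K" unfolding K_def using fs_neg Sn by blast
    show "a \<in> K \<Longrightarrow> x \<in> carrier S \<Longrightarrow> x \<otimes>\<^bsub>QS\<^esub> a \<in> K" unfolding K_def using fs_left Sm by blast
    show "a \<in> K \<Longrightarrow> x \<in> carrier S \<Longrightarrow> a \<otimes>\<^bsub>QS\<^esub> x \<in> K" unfolding K_def using fs_right Sm by blast
  qed
  moreover have "\<phi> ` D \<subseteq> K" unfolding K_def using fs_phiD De by blast
  ultimately have "J \<subseteq> K" unfolding J_def using ring.genideal_minimal[OF S] by blast
  then show ?thesis using j unfolding K_def by blast
qed

definition fq :: "'b \<Rightarrow> 'b" where "fq j = (THE s. fs j s)"

lemma fq: "j \<in> J \<Longrightarrow> fs j (fq j)"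
  unfolding fq_def using fs_ex fs_unique by (metis theI)
lemma fq_char: "j \<in> J \<Longrightarrow> fs j s \<Longrightarrow> fq j = s"
  using fq fs_unique by blast
lemma fq_c: "j \<in> J \<Longrightarrow> fq j \<in> carrier S"
  using fq unfolding fs_def by blast

lemma fq_add: "x \<in> J \<Longrightarrow> y \<in> J \<Longrightarrow> fq (x \<oplus>\<^bsub>QS\<^esub> y) = fq x \<oplus>\<^bsub>QS\<^esub> fq y"
  using fq_char[OF J_add fs_add[OF Jc Jc fq fq]] by blast
lemma fq_left: "x \<in> J \<Longrightarrow> t \<in> carrier S \<Longrightarrow> fq (t \<otimes>\<^bsub>QS\<^esub> x) = t \<otimes>\<^bsub>QS\<^esub> fq x"
  using fq_char[OF J_lm fs_left[OF _ Jc fq]] by blast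
lemma fq_right: "x \<in> J \<Longrightarrow> t \<in> carrier S \<Longrightarrow> fq (x \<otimes>\<^bsub>QS\<^esub> t) = fq x \<otimes>\<^bsub>QS\<^esub> t"
  using fq_char[OF J_rm fs_right[OF _ Jc fq]] by blast

lemma y0_ex: "\<exists>y\<in>carrier QS. \<forall>x\<in>J. y \<otimes>\<^bsub>QS\<^esub> x = fq x \<and> x \<otimes>\<^bsub>QS\<^esub> y = fq x"
proof (rule sqS_iii[OF Jdense])
  show "fq \<in> J \<rightarrow> carrier S" using fq_c by blast
  show "\<forall>x\<in>J. \<forall>y\<in>J. fq (x \<oplus>\<^bsub>QS\<^esub> y) = fq x \<oplus>\<^bsub>QS\<^esub> fq y" using fq_add by blast
  show "\<forall>x\<in>J. \<forall>r\<in>carrier S. fq (x \<otimes>\<^bsub>QS\<^esub> r) = fq x \<otimes>\<^bsub>QS\<^esub> r \<and> fq (r \<otimes>\<^bsub>QS\<^esub> x) = r \<otimes>\<^bsub>QS\<^esub> fq x"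
    using fq_left fq_right by blast
  show "\<forall>x\<in>J. \<forall>y\<in>J. x \<otimes>\<^bsub>QS\<^esub> fq y = fq x \<otimes>\<^bsub>QS\<^esub> y"
  proof (intro ballI)
    fix x y assume x: "x \<in> J" and y: "y \<in> J"
    have "x \<otimes>\<^bsub>QS\<^esub> fq y = fq (x \<otimes>\<^bsub>QS\<^esub> y)" using fq_left[OF y Jc[OF x]] by simp
    also have "\<dots> = fq x \<otimes>\<^bsub>QS\<^esub> y" using fq_right[OF x Jc[OF y]] by simp
    finally show "x \<otimes>\<^bsub>QS\<^esub> fq y = fq x \<otimes>\<^bsub>QS\<^esub> y" .
  qed
qed

lemma q_good: "\<exists>y\<in>ext_center QS. good q y D"
proof -
  obtain y where y: "y \<in> carrier QS" and yx: "\<forall>x\<in>J. y \<otimes>\<^bsub>QS\<^esub> x = fq x \<and> x \<otimes>\<^bsub>QS\<^esub> y = fq x"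
    using y0_ex by blast
  have c1: "y \<otimes>\<^bsub>QS\<^esub> s = s \<otimes>\<^bsub>QS\<^esub> y" if s: "s \<in> carrier S" for s
  proof -
    let ?w = "y \<otimes>\<^bsub>QS\<^esub> s \<oplus>\<^bsub>QS\<^esub> \<ominus>\<^bsub>QS\<^esub> (s \<otimes>\<^bsub>QS\<^esub> y)"
    have sc: "s \<in> carrier QS" using s Sc' by blast
    have "\<forall>x\<in>J. ?w \<otimes>\<^bsub>QS\<^esub> x = \<zero>\<^bsub>QS\<^esub>"
    proof
      fix x assume x: "x \<in> J"
      have xc: "x \<in> carrier QS" using Jc[OF x] Sc' by blast
      have "?w \<otimes>\<^bsub>QS\<^esub> x = y \<otimes>\<^bsub>QS\<^esub> (s \<otimes>\<^bsub>QS\<^esub> x) \<oplus>\<^bsub>QS\<^esub> \<ominus>\<^bsub>QS\<^esub> (s \<otimes>\<^bsub>QS\<^esub> (y \<otimes>\<^bsub>QS\<^esub> x))"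
        using y sc xc by (simp add: QS.l_distr QS.l_minus QS.m_assoc)
      also have "\<dots> = s \<otimes>\<^bsub>QS\<^esub> fq x \<oplus>\<^bsub>QS\<^esub> \<ominus>\<^bsub>QS\<^esub> (s \<otimes>\<^bsub>QS\<^esub> fq x)"
        using yx x J_lm[OF x s] fq_left[OF x s] by simp
      also have "\<dots> = \<zero>\<^bsub>QS\<^esub>" using sc fq_c[OF x] Sc' by (simp add: QS.r_neg)
      finally show "?w \<otimes>\<^bsub>QS\<^esub> x = \<zero>\<^bsub>QS\<^esub>" .
    qed
    then have "?w = \<zero>\<^bsub>QS\<^esub>" using sqS_ii Jdense y sc by simp
    then show ?thesis using QS_eq0 y sc by simp
  qed
  have c2: "y \<otimes>\<^bsub>QS\<^esub> p = p \<otimes>\<^bsub>QS\<^esub> y" if p: "p \<in> carrier QS" for p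
  proof -
    obtain I where I: "I \<in> dense_ideals S" and Ip: "\<forall>x\<in>I. p \<otimes>\<^bsub>QS\<^esub> x \<in> carrier S \<and> x \<otimes>\<^bsub>QS\<^esub> p \<in> carrier S"
      using sqS_i p by blast
    let ?w = "y \<otimes>\<^bsub>QS\<^esub> p \<oplus>\<^bsub>QS\<^esub> \<ominus>\<^bsub>QS\<^esub> (p \<otimes>\<^bsub>QS\<^esub> y)"
    have "\<forall>x\<in>I. ?w \<otimes>\<^bsub>QS\<^esub> x = \<zero>\<^bsub>QS\<^esub>"
    proof
      fix x assume x: "x \<in> I"
      have xS: "x \<in> carrier S" using dense_sub I x by blast
      have xc: "x \<in> carrier QS" using xS Sc' by blast
      have "?w \<otimes>\<^bsub>QS\<^esub> x = y \<otimes>\<^bsub>QS\<^esub> (p \<otimes>\<^bsub>QS\<^esub> x) \<oplus>\<^bsub>QS\<^esub> \<ominus>\<^bsub>QS\<^esub> (p \<otimes>\<^bsub>QS\<^esub> (y \<otimes>\<^bsub>QS\<^esub> x))"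
        using y p xc by (simp add: QS.l_distr QS.l_minus QS.m_assoc)
      also have "\<dots> = (p \<otimes>\<^bsub>QS\<^esub> x) \<otimes>\<^bsub>QS\<^esub> y \<oplus>\<^bsub>QS\<^esub> \<ominus>\<^bsub>QS\<^esub> (p \<otimes>\<^bsub>QS\<^esub> (x \<otimes>\<^bsub>QS\<^esub> y))"
        using c1 Ip x xS by simp
      also have "\<dots> = \<zero>\<^bsub>QS\<^esub>" using p xc y by (simp add: QS.m_assoc QS.r_neg)
      finally show "?w \<otimes>\<^bsub>QS\<^esub> x = \<zero>\<^bsub>QS\<^esub>" .
    qed
    then have "?w = \<zero>\<^bsub>QS\<^esub>" using sqS_ii I y p by simp
    then show ?thesis using QS_eq0 y p by simp
  qed
  have yZ: "y \<in> ext_center QS" unfolding ext_center_def ring_centralizer_def using y c2 by auto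
  have yd: "y \<otimes>\<^bsub>QS\<^esub> \<phi> d = \<phi> (q \<otimes>\<^bsub>QR\<^esub> d)" if d: "d \<in> D" for d
  proof -
    have "\<phi> d \<in> J" using phD_J d by blast
    then have "y \<otimes>\<^bsub>QS\<^esub> \<phi> d = fq (\<phi> d)" using yx by blast
    also have "\<dots> = \<phi> (d \<otimes>\<^bsub>QR\<^esub> q)" using fq_char[OF \<open>\<phi> d \<in> J\<close> fs_phiD[OF d]] .
    also have "d \<otimes>\<^bsub>QR\<^esub> q = q \<otimes>\<^bsub>QR\<^esub> d" using qcomm De[OF d] by simp
    finally show ?thesis .
  qed
  have "good q y D" unfolding good_def
  proof (intro conjI ballI)
    show "D \<subseteq> carrier R" by (rule Dsub)
    show "faithful D" by (rule faithD)
    fix d r assume d: "d \<in> D" and r: "r \<in> carrier R"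
    show "q \<otimes>\<^bsub>QR\<^esub> r \<otimes>\<^bsub>QR\<^esub> d \<in> carrier R" using D_qrd d r by blast
    have "y \<otimes>\<^bsub>QS\<^esub> \<phi> r \<otimes>\<^bsub>QS\<^esub> \<phi> d = \<phi> r \<otimes>\<^bsub>QS\<^esub> (y \<otimes>\<^bsub>QS\<^esub> \<phi> d)"
      using c2 y r De[OF d] by (simp add: QS.m_assoc phc Sc')
    also have "\<dots> = \<phi> (r \<otimes>\<^bsub>QR\<^esub> (q \<otimes>\<^bsub>QR\<^esub> d))" using yd d r De[OF d] by (simp add: phm)
    also have "r \<otimes>\<^bsub>QR\<^esub> (q \<otimes>\<^bsub>QR\<^esub> d) = q \<otimes>\<^bsub>QR\<^esub> r \<otimes>\<^bsub>QR\<^esub> d"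
    proof -
      have eq: "q \<otimes>\<^bsub>QR\<^esub> r = r \<otimes>\<^bsub>QR\<^esub> q" using qcomm[of r] r Rc' by simp
      show ?thesis by (subst eq) (use r De[OF d] qc in \<open>simp add: QR.m_assoc Rc'\<close>)
    qed
    finally show "y \<otimes>\<^bsub>QS\<^esub> \<phi> r \<otimes>\<^bsub>QS\<^esub> \<phi> d = \<phi> (q \<otimes>\<^bsub>QR\<^esub> r \<otimes>\<^bsub>QR\<^esub> d)" .
  qed
  then show ?thesis using yZ by blast
qed

end

context L begin

lemma q_good_L: assumes "q \<in> C_phi R QR S \<phi>" shows "\<exists>y\<in>ext_center QS. good q y (Dq R QR q)"
proof -
  interpret Lq R QR S QS \<phi> q by (intro Lq.intro L_axioms Lq_axioms.intro assms)
  show ?thesis using q_good D_def by simp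
qed

definition RCs where "RCs = generate_ring QR (carrier R \<union> C_phi R QR S \<phi>)"
definition Sts where "Sts = generate_ring QS (carrier S \<union> ext_center QS)"

lemma Cphi_sub: "C_phi R QR S \<phi> \<subseteq> carrier QR"
proof
  fix x assume "x \<in> C_phi R QR S \<phi>"
  then have "x \<in> ext_center QR" unfolding C_phi_def by simp
  then show "x \<in> carrier QR" unfolding ext_center_def ring_centralizer_def by simp
qed
lemma ZS_sub: "ext_center QS \<subseteq> carrier QS"
  unfolding ext_center_def ring_centralizer_def by (rule subsetI) simp
lemma ZS_comm: "z \<in> ext_center QS \<Longrightarrow> p \<in> carrier QS \<Longrightarrow> z \<otimes>\<^bsub>QS\<^esub> p = p \<otimes>\<^bsub>QS\<^esub> z"
  unfolding ext_center_def ring_centralizer_def by simp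
lemma RC_gen_sub: "carrier R \<union> C_phi R QR S \<phi> \<subseteq> carrier QR" using Rc Cphi_sub by blast
lemma St_gen_sub: "carrier S \<union> ext_center QS \<subseteq> carrier QS" using Sc ZS_sub by blast
lemma RC_sub: "RCs \<subseteq> carrier QR" unfolding RCs_def using QR.generate_ring_incl[OF RC_gen_sub] .
lemma St_sub: "Sts \<subseteq> carrier QS" unfolding Sts_def using QS.generate_ring_incl[OF St_gen_sub] .
lemma RC_subring: "subring RCs QR" unfolding RCs_def using QR.generate_ring_is_subring[OF RC_gen_sub] .
lemma St_subring: "subring Sts QS" unfolding Sts_def using QS.generate_ring_is_subring[OF St_gen_sub] .
lemma R_RC: "carrier R \<subseteq> RCs" unfolding RCs_def by (rule subsetI, rule generate_ring.incl) simp
lemma S_St: "carrier S \<subseteq> Sts" unfolding Sts_def by (rule subsetI, rule generate_ring.incl) simp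
lemma Z_St: "ext_center QS \<subseteq> Sts" unfolding Sts_def by (rule subsetI, rule generate_ring.incl) simp

definition inv_prop :: "'a \<Rightarrow> 'b \<Rightarrow> bool" where
  "inv_prop x y \<longleftrightarrow> y \<in> carrier QS \<and> y \<in> Sts \<and> (\<exists>I. good x y I) \<and> (\<forall>c\<in>Cset. c \<otimes>\<^bsub>QS\<^esub> y = y \<otimes>\<^bsub>QS\<^esub> c)"

lemma inv_propI: "y \<in> carrier QS \<Longrightarrow> y \<in> Sts \<Longrightarrow> good x y I \<Longrightarrow> (\<And>c. c \<in> Cset \<Longrightarrow> c \<otimes>\<^bsub>QS\<^esub> y = y \<otimes>\<^bsub>QS\<^esub> c) \<Longrightarrow> inv_prop x y"
  unfolding inv_prop_def by blast
lemma inv_propD: assumes "inv_prop x y"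
  shows "y \<in> carrier QS" "y \<in> Sts" "\<exists>I. good x y I" "\<And>c. c \<in> Cset \<Longrightarrow> c \<otimes>\<^bsub>QS\<^esub> y = y \<otimes>\<^bsub>QS\<^esub> c"
  using assms unfolding inv_prop_def by blast+

lemma St_neg: "y \<in> Sts \<Longrightarrow> \<ominus>\<^bsub>QS\<^esub> y \<in> Sts" unfolding Sts_def by (rule generate_ring.a_inv)
lemma St_add: "y1 \<in> Sts \<Longrightarrow> y2 \<in> Sts \<Longrightarrow> y1 \<oplus>\<^bsub>QS\<^esub> y2 \<in> Sts" unfolding Sts_def by (rule generate_ring.eng_add)
lemma St_mult: "y1 \<in> Sts \<Longrightarrow> y2 \<in> Sts \<Longrightarrow> y1 \<otimes>\<^bsub>QS\<^esub> y2 \<in> Sts" unfolding Sts_def by (rule generate_ring.eng_mult)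
lemma Cc: "c \<in> Cset \<Longrightarrow> c \<in> carrier QS" using Cset_c Sc' by blast

lemma main_ex: assumes "x \<in> RCs" shows "\<exists>y. inv_prop x y"
proof -
  have "x \<in> generate_ring QR (carrier R \<union> C_phi R QR S \<phi>)" using assms unfolding RCs_def .
  then have "x \<in> carrier QR \<and> (\<exists>y. inv_prop x y)"
  proof (induction rule: generate_ring.induct)
    case one
    have "inv_prop \<one>\<^bsub>QR\<^esub> \<one>\<^bsub>QS\<^esub>"
    proof (rule inv_propI)
      show "\<one>\<^bsub>QS\<^esub> \<in> carrier QS" by simp
      show "\<one>\<^bsub>QS\<^esub> \<in> Sts" unfolding Sts_def by (rule generate_ring.one)
      show "good \<one>\<^bsub>QR\<^esub> \<one>\<^bsub>QS\<^esub> (carrier R)" using good_R[OF R1] ph1 by simp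
      fix c assume "c \<in> Cset" then show "c \<otimes>\<^bsub>QS\<^esub> \<one>\<^bsub>QS\<^esub> = \<one>\<^bsub>QS\<^esub> \<otimes>\<^bsub>QS\<^esub> c" using Cc by simp
    qed
    then show ?case by auto
  next
    case (incl h)
    then show ?case
    proof
      assume h: "h \<in> carrier R"
      have "inv_prop h (\<phi> h)"
      proof (rule inv_propI)
        show "\<phi> h \<in> carrier QS" using phc h Sc' by blast
        show "\<phi> h \<in> Sts" using S_St phc h by blast
        show "good h (\<phi> h) (carrier R)" using good_R h by blast
        fix c assume "c \<in> Cset" then show "c \<otimes>\<^bsub>QS\<^esub> \<phi> h = \<phi> h \<otimes>\<^bsub>QS\<^esub> c" using Cset_comm h by blast
      qed
      then show ?thesis using h Rc' by blast
    next
      assume h: "h \<in> C_phi R QR S \<phi>"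
      obtain y where y: "y \<in> ext_center QS" "good h y (Dq R QR h)" using q_good_L[OF h] by blast
      have "inv_prop h y"
      proof (rule inv_propI)
        show "y \<in> carrier QS" using y(1) ZS_sub by blast
        show "y \<in> Sts" using y(1) Z_St by blast
        show "good h y (Dq R QR h)" using y(2) .
        fix c assume "c \<in> Cset"
        then have "c \<in> carrier QS" using Cc by blast
        then show "c \<otimes>\<^bsub>QS\<^esub> y = y \<otimes>\<^bsub>QS\<^esub> c" using ZS_comm[OF y(1)] by simp
      qed
      then show ?thesis using h Cphi_sub by blast
    qed
  next
    case (a_inv h)
    then obtain y where h: "h \<in> carrier QR" and y: "inv_prop h y" by blast
    obtain I where g: "good h y I" using inv_propD(3)[OF y] by blast
    have yc: "y \<in> carrier QS" using inv_propD(1)[OF y] .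
    have "inv_prop (\<ominus>\<^bsub>QR\<^esub> h) (\<ominus>\<^bsub>QS\<^esub> y)"
    proof (rule inv_propI)
      show "\<ominus>\<^bsub>QS\<^esub> y \<in> carrier QS" using yc by simp
      show "\<ominus>\<^bsub>QS\<^esub> y \<in> Sts" using St_neg inv_propD(2)[OF y] .
      show "good (\<ominus>\<^bsub>QR\<^esub> h) (\<ominus>\<^bsub>QS\<^esub> y) I" using good_neg[OF g h yc] .
      fix c assume c: "c \<in> Cset"
      have cc: "c \<in> carrier QS" using Cc c .
      have "c \<otimes>\<^bsub>QS\<^esub> \<ominus>\<^bsub>QS\<^esub> y = \<ominus>\<^bsub>QS\<^esub> (c \<otimes>\<^bsub>QS\<^esub> y)" using cc yc by (simp add: QS.r_minus)
      also have "\<dots> = \<ominus>\<^bsub>QS\<^esub> (y \<otimes>\<^bsub>QS\<^esub> c)" using inv_propD(4)[OF y c] by simp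
      also have "\<dots> = \<ominus>\<^bsub>QS\<^esub> y \<otimes>\<^bsub>QS\<^esub> c" using cc yc by (simp add: QS.l_minus)
      finally show "c \<otimes>\<^bsub>QS\<^esub> \<ominus>\<^bsub>QS\<^esub> y = \<ominus>\<^bsub>QS\<^esub> y \<otimes>\<^bsub>QS\<^esub> c" .
    qed
    then show ?case using h by blast
  next
    case (eng_add h1 h2)
    then obtain y1 y2 where h: "h1 \<in> carrier QR" "h2 \<in> carrier QR" and y: "inv_prop h1 y1" "inv_prop h2 y2" by blast
    obtain I1 I2 where g: "good h1 y1 I1" "good h2 y2 I2" using inv_propD(3)[OF y(1)] inv_propD(3)[OF y(2)] by blast
    have yc: "y1 \<in> carrier QS" "y2 \<in> carrier QS" using inv_propD(1)[OF y(1)] inv_propD(1)[OF y(2)] .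
    have "inv_prop (h1 \<oplus>\<^bsub>QR\<^esub> h2) (y1 \<oplus>\<^bsub>QS\<^esub> y2)"
    proof (rule inv_propI)
      show "y1 \<oplus>\<^bsub>QS\<^esub> y2 \<in> carrier QS" using yc by simp
      show "y1 \<oplus>\<^bsub>QS\<^esub> y2 \<in> Sts" using St_add inv_propD(2)[OF y(1)] inv_propD(2)[OF y(2)] .
      show "good (h1 \<oplus>\<^bsub>QR\<^esub> h2) (y1 \<oplus>\<^bsub>QS\<^esub> y2) (prods I1 I2)" using good_add[OF g h yc] .
      fix c assume c: "c \<in> Cset"
      have cc: "c \<in> carrier QS" using Cc c .
      have "c \<otimes>\<^bsub>QS\<^esub> (y1 \<oplus>\<^bsub>QS\<^esub> y2) = c \<otimes>\<^bsub>QS\<^esub> y1 \<oplus>\<^bsub>QS\<^esub> c \<otimes>\<^bsub>QS\<^esub> y2" using cc yc by (simp add: QS.r_distr)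
      also have "\<dots> = y1 \<otimes>\<^bsub>QS\<^esub> c \<oplus>\<^bsub>QS\<^esub> y2 \<otimes>\<^bsub>QS\<^esub> c" using inv_propD(4)[OF y(1) c] inv_propD(4)[OF y(2) c] by simp
      also have "\<dots> = (y1 \<oplus>\<^bsub>QS\<^esub> y2) \<otimes>\<^bsub>QS\<^esub> c" using cc yc by (simp add: QS.l_distr)
      finally show "c \<otimes>\<^bsub>QS\<^esub> (y1 \<oplus>\<^bsub>QS\<^esub> y2) = (y1 \<oplus>\<^bsub>QS\<^esub> y2) \<otimes>\<^bsub>QS\<^esub> c" .
    qed
    then show ?case using h by blast
  next
    case (eng_mult h1 h2)
    then obtain y1 y2 where h: "h1 \<in> carrier QR" "h2 \<in> carrier QR" and y: "inv_prop h1 y1" "inv_prop h2 y2" by blast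
    obtain I1 I2 where g: "good h1 y1 I1" "good h2 y2 I2" using inv_propD(3)[OF y(1)] inv_propD(3)[OF y(2)] by blast
    have yc: "y1 \<in> carrier QS" "y2 \<in> carrier QS" using inv_propD(1)[OF y(1)] inv_propD(1)[OF y(2)] .
    have "inv_prop (h1 \<otimes>\<^bsub>QR\<^esub> h2) (y1 \<otimes>\<^bsub>QS\<^esub> y2)"
    proof (rule inv_propI)
      show "y1 \<otimes>\<^bsub>QS\<^esub> y2 \<in> carrier QS" using yc by simp
      show "y1 \<otimes>\<^bsub>QS\<^esub> y2 \<in> Sts" using St_mult inv_propD(2)[OF y(1)] inv_propD(2)[OF y(2)] .
      show "good (h1 \<otimes>\<^bsub>QR\<^esub> h2) (y1 \<otimes>\<^bsub>QS\<^esub> y2) (prods I2 I1)" using good_mult[OF g h yc] .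
      fix c assume c: "c \<in> Cset"
      have cc: "c \<in> carrier QS" using Cc c .
      have "c \<otimes>\<^bsub>QS\<^esub> (y1 \<otimes>\<^bsub>QS\<^esub> y2) = (c \<otimes>\<^bsub>QS\<^esub> y1) \<otimes>\<^bsub>QS\<^esub> y2" using cc yc by (simp add: QS.m_assoc)
      also have "\<dots> = (y1 \<otimes>\<^bsub>QS\<^esub> c) \<otimes>\<^bsub>QS\<^esub> y2" using inv_propD(4)[OF y(1) c] by simp
      also have "\<dots> = y1 \<otimes>\<^bsub>QS\<^esub> (c \<otimes>\<^bsub>QS\<^esub> y2)" using cc yc by (simp add: QS.m_assoc)
      also have "\<dots> = y1 \<otimes>\<^bsub>QS\<^esub> (y2 \<otimes>\<^bsub>QS\<^esub> c)" using inv_propD(4)[OF y(2) c] by simp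
      also have "\<dots> = (y1 \<otimes>\<^bsub>QS\<^esub> y2) \<otimes>\<^bsub>QS\<^esub> c" using cc yc by (simp add: QS.m_assoc)
      finally show "c \<otimes>\<^bsub>QS\<^esub> (y1 \<otimes>\<^bsub>QS\<^esub> y2) = (y1 \<otimes>\<^bsub>QS\<^esub> y2) \<otimes>\<^bsub>QS\<^esub> c" .
    qed
    then show ?case using h by blast
  qed
  then show ?thesis by blast
qed

definition psi :: "'a \<Rightarrow> 'b" where "psi x = (THE y. y \<in> carrier QS \<and> (\<exists>I. good x y I))"

lemma psi_eq: assumes x: "x \<in> RCs" and y: "y \<in> carrier QS" and g: "good x y I" shows "psi x = y"
  unfolding psi_def
proof (rule the_equality)
  show "y \<in> carrier QS \<and> (\<exists>I. good x y I)" using y g by blast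
  fix y' assume "y' \<in> carrier QS \<and> (\<exists>I. good x y' I)"
  then obtain I' where y': "y' \<in> carrier QS" "good x y' I'" by blast
  have xc: "x \<in> carrier QR" using x RC_sub by blast
  show "y' = y" using good_unique[OF y'(2) g xc y'(1) y] .
qed

lemma psi_inv: assumes x: "x \<in> RCs" shows "inv_prop x (psi x)"
proof -
  obtain y where y: "inv_prop x y" using main_ex x by blast
  obtain I where "good x y I" using inv_propD(3)[OF y] by blast
  then have "psi x = y" using psi_eq[OF x inv_propD(1)[OF y]] by blast
  then show ?thesis using y by simp
qed

lemma psi_R: assumes r: "r \<in> carrier R" shows "psi r = \<phi> r"
proof -
  have "r \<in> RCs" using R_RC r by blast
  moreover have "\<phi> r \<in> carrier QS" using phc r Sc' by blast
  ultimately show ?thesis using psi_eq good_R[OF r] by blast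
qed

lemma psi_hom: "psi \<in> ring_hom (QR\<lparr>carrier := RCs\<rparr>) (QS\<lparr>carrier := Sts\<rparr>)"
proof (rule ring_hom_memI)
  fix x assume "x \<in> carrier (QR\<lparr>carrier := RCs\<rparr>)"
  then have "x \<in> RCs" by simp
  then show "psi x \<in> carrier (QS\<lparr>carrier := Sts\<rparr>)" using inv_propD(2)[OF psi_inv] by simp
next
  fix x y assume "x \<in> carrier (QR\<lparr>carrier := RCs\<rparr>)" "y \<in> carrier (QR\<lparr>carrier := RCs\<rparr>)"
  then have x: "x \<in> RCs" and y: "y \<in> RCs" by auto
  obtain I1 where g1: "good x (psi x) I1" using inv_propD(3)[OF psi_inv[OF x]] by blast
  obtain I2 where g2: "good y (psi y) I2" using inv_propD(3)[OF psi_inv[OF y]] by blast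
  have c: "psi x \<in> carrier QS" "psi y \<in> carrier QS" using inv_propD(1)[OF psi_inv[OF x]] inv_propD(1)[OF psi_inv[OF y]] .
  have xc: "x \<in> carrier QR" "y \<in> carrier QR" using x y RC_sub by auto
  have xy: "x \<otimes>\<^bsub>QR\<^esub> y \<in> RCs" using x y unfolding RCs_def by (rule generate_ring.eng_mult)
  have "psi (x \<otimes>\<^bsub>QR\<^esub> y) = psi x \<otimes>\<^bsub>QS\<^esub> psi y"
    using psi_eq[OF xy _ good_mult[OF g1 g2 xc c]] c by simp
  then show "psi (x \<otimes>\<^bsub>QR\<lparr>carrier := RCs\<rparr>\<^esub> y) = psi x \<otimes>\<^bsub>QS\<lparr>carrier := Sts\<rparr>\<^esub> psi y" by simp
  have xy': "x \<oplus>\<^bsub>QR\<^esub> y \<in> RCs" using x y unfolding RCs_def by (rule generate_ring.eng_add)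
  have "psi (x \<oplus>\<^bsub>QR\<^esub> y) = psi x \<oplus>\<^bsub>QS\<^esub> psi y"
    using psi_eq[OF xy' _ good_add[OF g1 g2 xc c]] c by simp
  then show "psi (x \<oplus>\<^bsub>QR\<lparr>carrier := RCs\<rparr>\<^esub> y) = psi x \<oplus>\<^bsub>QS\<lparr>carrier := Sts\<rparr>\<^esub> psi y" by simp
next
  show "psi \<one>\<^bsub>QR\<lparr>carrier := RCs\<rparr>\<^esub> = \<one>\<^bsub>QS\<lparr>carrier := Sts\<rparr>\<^esub>" using psi_R[OF R1] ph1 by simp
qed

lemma psi_Z: "psi ` C_phi R QR S \<phi> \<subseteq> ext_center QS"
proof
  fix y assume "y \<in> psi ` C_phi R QR S \<phi>"
  then obtain q where q: "q \<in> C_phi R QR S \<phi>" and yq: "y = psi q" by blast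
  obtain z where z: "z \<in> ext_center QS" "good q z (Dq R QR q)" using q_good_L[OF q] by blast
  have qR: "q \<in> RCs" unfolding RCs_def by (rule generate_ring.incl) (use q in simp)
  have "z \<in> carrier QS" using z(1) ZS_sub by blast
  then have "psi q = z" using psi_eq[OF qR _ z(2)] by simp
  then show "y \<in> ext_center QS" using yq z by simp
qed

lemma psi_unique:
  assumes h: "\<psi>' \<in> ring_hom (QR\<lparr>carrier := RCs\<rparr>) (QS\<lparr>carrier := Sts\<rparr>)" and e: "\<forall>r\<in>carrier R. \<psi>' r = \<phi> r"
    and x: "x \<in> RCs"
  shows "\<psi>' x = psi x"
proof -
  obtain I where g: "good x (psi x) I" using inv_propD(3)[OF psi_inv[OF x]] by blast
  have "\<psi>' x \<in> Sts" using ring_hom_closed[OF h, of x] x by simp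
  then have hc: "\<psi>' x \<in> carrier QS" using St_sub by blast
  have hm: "\<psi>' (a \<otimes>\<^bsub>QR\<^esub> b) = \<psi>' a \<otimes>\<^bsub>QS\<^esub> \<psi>' b" if "a \<in> RCs" "b \<in> RCs" for a b
    using ring_hom_mult[OF h, of a b] that by simp
  have "good x (\<psi>' x) I" unfolding good_def
  proof (intro conjI ballI)
    show "I \<subseteq> carrier R" "faithful I" using g unfolding good_def by auto
    fix i r assume i: "i \<in> I" and r: "r \<in> carrier R"
    have ir: "i \<in> carrier R" using i g unfolding good_def by auto
    show m: "x \<otimes>\<^bsub>QR\<^esub> r \<otimes>\<^bsub>QR\<^esub> i \<in> carrier R" using g i r unfolding good_def by auto
    have rR: "r \<in> RCs" "i \<in> RCs" using r ir R_RC by auto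
    have xr: "x \<otimes>\<^bsub>QR\<^esub> r \<in> RCs" using x rR(1) unfolding RCs_def by (rule generate_ring.eng_mult)
    have "\<psi>' (x \<otimes>\<^bsub>QR\<^esub> r \<otimes>\<^bsub>QR\<^esub> i) = \<psi>' x \<otimes>\<^bsub>QS\<^esub> \<psi>' r \<otimes>\<^bsub>QS\<^esub> \<psi>' i"
      using hm[OF xr rR(2)] hm[OF x rR(1)] by simp
    also have "\<dots> = \<psi>' x \<otimes>\<^bsub>QS\<^esub> \<phi> r \<otimes>\<^bsub>QS\<^esub> \<phi> i" using e r ir by simp
    finally have "\<psi>' x \<otimes>\<^bsub>QS\<^esub> \<phi> r \<otimes>\<^bsub>QS\<^esub> \<phi> i = \<psi>' (x \<otimes>\<^bsub>QR\<^esub> r \<otimes>\<^bsub>QR\<^esub> i)" by simp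
    also have "\<dots> = \<phi> (x \<otimes>\<^bsub>QR\<^esub> r \<otimes>\<^bsub>QR\<^esub> i)" using e m by blast
    finally show "\<psi>' x \<otimes>\<^bsub>QS\<^esub> \<phi> r \<otimes>\<^bsub>QS\<^esub> \<phi> i = \<phi> (x \<otimes>\<^bsub>QR\<^esub> r \<otimes>\<^bsub>QR\<^esub> i)" .
  qed
  then show ?thesis using psi_eq[OF x hc] by simp
qed

lemma psi_centralizing: "centralizing (QR\<lparr>carrier := RCs\<rparr>) (QS\<lparr>carrier := Sts\<rparr>) psi"
  unfolding centralizing_def
proof -
  let ?Z = "ring_centralizer (QS\<lparr>carrier := Sts\<rparr>) (psi ` carrier (QR\<lparr>carrier := RCs\<rparr>))"
  let ?H = "psi ` carrier (QR\<lparr>carrier := RCs\<rparr>) \<union> ?Z"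
  have Zeq: "?Z = {s \<in> Sts. \<forall>x\<in>RCs. s \<otimes>\<^bsub>QS\<^esub> psi x = psi x \<otimes>\<^bsub>QS\<^esub> s}"
    unfolding ring_centralizer_def by simp
  have pRC: "psi ` RCs \<subseteq> Sts" using inv_propD(2)[OF psi_inv] by blast
  have HS: "?H \<subseteq> Sts"
  proof -
    have "psi ` carrier (QR\<lparr>carrier := RCs\<rparr>) \<subseteq> Sts" using pRC by simp
    moreover have "?Z \<subseteq> Sts" unfolding Zeq by (rule subsetI) simp
    ultimately show ?thesis by (rule Un_least)
  qed
  have HQ: "?H \<subseteq> carrier QS" using HS St_sub by (rule subset_trans)
  have eq1: "generate_ring (QS\<lparr>carrier := Sts\<rparr>) ?H = generate_ring QS ?H"
    using QS.subring_gen_equality[OF St_subring HS] by simp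
  have "generate_ring QS ?H \<subseteq> Sts" using QS.generate_ring_min_subring1[OF HQ St_subring HS] .
  moreover have "Sts \<subseteq> generate_ring QS ?H"
  proof -
    have sub: "subring (generate_ring QS ?H) QS" using QS.generate_ring_is_subring[OF HQ] .
    have Zg: "ext_center QS \<subseteq> generate_ring QS ?H"
    proof
      fix z assume z: "z \<in> ext_center QS"
      have "z \<otimes>\<^bsub>QS\<^esub> psi x = psi x \<otimes>\<^bsub>QS\<^esub> z" if x: "x \<in> RCs" for x
        using ZS_comm[OF z inv_propD(1)[OF psi_inv[OF x]]] .
      moreover have "z \<in> Sts" using z Z_St by (rule subsetD[rotated])
      ultimately have "z \<in> ?Z" unfolding Zeq by simp
      then have "z \<in> ?H" by (rule UnI2)
      then show "z \<in> generate_ring QS ?H" by (rule generate_ring.incl)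
    qed
    have "s \<in> generate_ring QS ?H" if s: "s \<in> carrier S" for s
      using s
    proof (induction rule: S_induct)
      case one then show ?case by (rule generate_ring.one)
    next
      case (phi r)
      have "r \<in> RCs" using R_RC phi by (rule subsetD)
      then have "psi r \<in> ?H" by simp
      then have "psi r \<in> generate_ring QS ?H" by (rule generate_ring.incl)
      then show ?case using psi_R[OF phi] by simp
    next
      case (cen c)
      have "c \<otimes>\<^bsub>QS\<^esub> psi x = psi x \<otimes>\<^bsub>QS\<^esub> c" if x: "x \<in> RCs" for x
        using inv_propD(4)[OF psi_inv[OF x] cen] .
      moreover have "c \<in> Sts" using S_St Cset_c[OF cen] by (rule subsetD)
      ultimately have "c \<in> ?Z" unfolding Zeq by simp
      then have "c \<in> ?H" by (rule UnI2)
      then show ?case by (rule generate_ring.incl)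
    next
      case (neg a) then show ?case by (intro generate_ring.a_inv)
    next
      case (add a b) then show ?case by (intro generate_ring.eng_add)
    next
      case (mult a b) then show ?case by (intro generate_ring.eng_mult)
    qed
    then have "carrier S \<union> ext_center QS \<subseteq> generate_ring QS ?H" using Zg by blast
    then have "generate_ring QS (carrier S \<union> ext_center QS) \<subseteq> generate_ring QS ?H"
      by (rule QS.generate_ring_min_subring1[OF St_gen_sub sub])
    then show ?thesis by (simp only: Sts_def[symmetric])
  qed
  ultimately show "carrier (QS\<lparr>carrier := Sts\<rparr>) = generate_ring (QS\<lparr>carrier := Sts\<rparr>) ?H"
    using eq1 by simp
qed
end

theorem lemma1p1:
  fixes R QR :: "'a ring" and S QS :: "'b ring" and \<phi> :: "'a \<Rightarrow> 'b"
  assumes "ring R" and "ring S"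
    and "sym_quot R QR" and "sym_quot S QS"
    and "\<phi> \<in> ring_hom R S" and "centralizing R S \<phi>"
  defines "Rt \<equiv> generate_ring QR (carrier R \<union> ext_center QR)"
    and "St \<equiv> generate_ring QS (carrier S \<union> ext_center QS)"
    and "RC \<equiv> generate_ring QR (carrier R \<union> C_phi R QR S \<phi>)"
  shows "subring RC QR \<and> RC \<subseteq> Rt \<and> carrier R \<subseteq> RC \<and>
    (\<exists>\<psi>. \<psi> \<in> ring_hom (QR\<lparr>carrier := RC\<rparr>) (QS\<lparr>carrier := St\<rparr>) \<and>
         (\<forall>r \<in> carrier R. \<psi> r = \<phi> r) \<and>
         centralizing (QR\<lparr>carrier := RC\<rparr>) (QS\<lparr>carrier := St\<rparr>) \<psi> \<and>
         \<psi> ` C_phi R QR S \<phi> \<subseteq> ext_center QS \<and>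
         (\<forall>\<psi>'. \<psi>' \<in> ring_hom (QR\<lparr>carrier := RC\<rparr>) (QS\<lparr>carrier := St\<rparr>) \<and>
                (\<forall>r \<in> carrier R. \<psi>' r = \<phi> r) \<longrightarrow> (\<forall>x \<in> RC. \<psi>' x = \<psi> x)))"
proof -
  interpret L R QR S QS \<phi> by (rule L.intro) (rule assms)+
  have RC: "RC = RCs" unfolding RC_def RCs_def ..
  have St: "St = Sts" unfolding St_def Sts_def ..
  have Rt: "RCs \<subseteq> Rt" unfolding Rt_def RCs_def
  proof (rule QR.mono_generate_ring)
    have "C_phi R QR S \<phi> \<subseteq> ext_center QR" unfolding C_phi_def by blast
    then show "carrier R \<union> C_phi R QR S \<phi> \<subseteq> carrier R \<union> ext_center QR" by blast
    have "ext_center QR \<subseteq> carrier QR" unfolding ext_center_def ring_centralizer_def by (rule subsetI) simp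
    then show "carrier R \<union> ext_center QR \<subseteq> carrier QR" using Rc by blast
  qed
  show ?thesis unfolding RC St
  proof (intro conjI exI[of _ psi])
    show "subring RCs QR" by (rule RC_subring)
    show "RCs \<subseteq> Rt" by (rule Rt)
    show "carrier R \<subseteq> RCs" by (rule R_RC)
    show "psi \<in> ring_hom (QR\<lparr>carrier := RCs\<rparr>) (QS\<lparr>carrier := Sts\<rparr>)" by (rule psi_hom)
    show "\<forall>r\<in>carrier R. psi r = \<phi> r" using psi_R by blast
    show "centralizing (QR\<lparr>carrier := RCs\<rparr>) (QS\<lparr>carrier := Sts\<rparr>) psi" by (rule psi_centralizing)
    show "psi ` C_phi R QR S \<phi> \<subseteq> ext_center QS" by (rule psi_Z)
    show "\<forall>\<psi>'. \<psi>' \<in> ring_hom (QR\<lparr>carrier := RCs\<rparr>) (QS\<lparr>carrier := Sts\<rparr>) \<and>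
                (\<forall>r \<in> carrier R. \<psi>' r = \<phi> r) \<longrightarrow> (\<forall>x \<in> RCs. \<psi>' x = psi x)"
      using psi_unique by blast
  qed
qed

end
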